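(* Assume the setting below. There exists a constant $C\geq0$, independent of $\varepsilon$ and $h$, such that for all $n=0,\ldots,N$ and $x,y\in\mathbb R^d$, $$|v^\varepsilon(t_n,x)-v^\varepsilon(t_n,y)|\leq LC|x-y|\quad\text{and}\quad|\widetilde v(t_n,x)-v^\varepsilon(t_n,x)|\leq LC\varepsilon.$$
   Context: Let $T>0$, $d,p,q\ge1$, and $(\Omega,\mathbb F,\mathbb P)$ with filtration generated by a $p$-dimensional Brownian motion $B$. Let $A\subseteq\mathbb R^q$ be a compact subset of a separable metric space, $\mu:[0,T]\times\mathbb R^d\times A\to\mathbb R^d$, $\sigma:[0,T]\times\mathbb R^d\times A\to\mathbb R^{d\times p}$ continuous with $|\mu(t,x,a)-\mu(s,y,a)|+\|\sigma(t,x,a)-\sigma(s,y,a)\|\leq C_0(|x-y|+|t-s|^{1/2})$, and $\psi:\mathbb R^d\to\mathbb R$ continuous with $|\psi(x)-\psi(y)|\le L|x-y|$. Let $N\ge1$, $h=T/N$, $t_n=nh$. $\mathcal A_h$ is the set of $A$-valued progressively measurable processes $\alpha_s=\sum_{i=0}^{N-1}a_i\mathbf 1_{s\in[t_i,t_{i+1})}$; for $\varepsilon>0$, $\mathcal E_h$ is the set of $\mathbb R^d$-valued progressively measurable processes $e_s=\sum_{i=0}^{N-1}e_i\mathbf 1_{s\in[t_i,t_{i+1})}$ with $|e_i|\le\varepsilon$. For $\alpha\in\mathcal A_h$, $e\in\mathcal E_h$ define $\widetilde X^{t_n,x,\alpha,e}$ by $\widetilde X_{t_n}=x$, $\widetilde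 X_{t_{i+1}}=\widetilde X_{t_i}+\mu(t_i,\widetilde X_{t_i}+e_i,a_i)h+\sigma(t_i,\widetilde X_{t_i}+e_i,a_i)(B_{t_{i+1}}-B_{t_i})$, $i=n,\ldots,N-1$, and $\widetilde X^{t_n,x,\alpha}:=\widetilde X^{t_n,x,\alpha,0}$ (the Euler–Maruyama scheme). Set $\widetilde v(t_n,x)=\sup_{\alpha\in\mathcal A_h}\mathbb E[\psi(\widetilde X^{t_n,x,\alpha}_T)]$ and $v^\varepsilon(t_n,x)=\sup_{\alpha\in\mathcal A_h,e\in\mathcal E_h}\mathbb E[\psi(\widetilde X^{t_n,x,\alpha,e}_T)]$. *)

theory Defs
  imports "HOL-Probability.Probability"
begin

definition brownian_motion :: "'w measure \<Rightarrow> (real \<Rightarrow> 'w \<Rightarrow> real^'p) \<Rightarrow> bool" where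
  "brownian_motion M B \<longleftrightarrow>
     prob_space M \<and>
     (\<forall>t\<ge>0. B t \<in> borel_measurable M) \<and>
     (\<forall>\<omega>\<in>space M. B 0 \<omega> = 0 \<and> continuous_on {0..} (\<lambda>t. B t \<omega>)) \<and>
     (\<forall>s t. 0 \<le> s \<and> s < t \<longrightarrow>
        distributed M lborel (\<lambda>\<omega>. B t \<omega> - B s \<omega>)
          (\<lambda>z. ennreal (\<Prod>i\<in>UNIV. normal_density 0 (sqrt (t - s)) (z $ i)))) \<and>
     (\<forall>(k::nat) (u::nat \<Rightarrow> real). 0 \<le> u 0 \<and> (\<forall>i<k. u i < u (Suc i)) \<longrightarrow>
        prob_space.indep_vars M (\<lambda>_. borel) (\<lambda>i \<omega>. B (u (Suc i)) \<omega> - B (u i) \<omega>) {..<k})"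

definition BM_filtration :: "'w measure \<Rightarrow> (real \<Rightarrow> 'w \<Rightarrow> real^'p) \<Rightarrow> real \<Rightarrow> 'w measure" where
  "BM_filtration M B t =
     sigma (space M) {B r -` S \<inter> space M | r S. r \<in> {0..t} \<and> S \<in> sets borel}"

definition grid_time :: "real \<Rightarrow> nat \<Rightarrow> nat \<Rightarrow> real" where
  "grid_time T N i = real i * (T / real N)"

text \<open>Piecewise constant progressively measurable A-valued controls on the grid
  (alpha_s = a_i on [t_i,t_{i+1})): exactly a_i F_{t_i}-measurable with values in A.\<close>
definition grid_controls ::
  "'w measure \<Rightarrow> (real \<Rightarrow> 'w \<Rightarrow> real^'p) \<Rightarrow> real \<Rightarrow> nat \<Rightarrow> ('c::topological_space) set
     \<Rightarrow> (nat \<Rightarrow> 'w \<Rightarrow> 'c) set" where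
  "grid_controls M B T N A =
     {a. \<forall>i<N. (\<forall>\<omega>\<in>space M. a i \<omega> \<in> A) \<and>
                a i \<in> borel_measurable (BM_filtration M B (grid_time T N i))}"

definition grid_perturbations ::
  "'w measure \<Rightarrow> (real \<Rightarrow> 'w \<Rightarrow> real^'p) \<Rightarrow> real \<Rightarrow> nat \<Rightarrow> real
     \<Rightarrow> (nat \<Rightarrow> 'w \<Rightarrow> real^'d) set" where
  "grid_perturbations M B T N \<epsilon> =
     {e. \<forall>i<N. (\<forall>\<omega>\<in>space M. norm (e i \<omega>) \<le> \<epsilon>) \<and>
                e i \<in> borel_measurable (BM_filtration M B (grid_time T N i))}"

text \<open>Perturbed Euler--Maruyama scheme started at time t_n from x:
  euler_scheme ... n a e x k \<omega> is the state at time t_{n+k}.\<close>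
primrec euler_scheme ::
  "(real \<Rightarrow> real^'d \<Rightarrow> 'c \<Rightarrow> real^'d) \<Rightarrow> (real \<Rightarrow> real^'d \<Rightarrow> 'c \<Rightarrow> real^'p^'d)
   \<Rightarrow> (real \<Rightarrow> 'w \<Rightarrow> real^'p) \<Rightarrow> real \<Rightarrow> nat \<Rightarrow> nat
   \<Rightarrow> (nat \<Rightarrow> 'w \<Rightarrow> 'c) \<Rightarrow> (nat \<Rightarrow> 'w \<Rightarrow> real^'d) \<Rightarrow> real^'d \<Rightarrow> nat \<Rightarrow> 'w \<Rightarrow> real^'d" where
  "euler_scheme \<mu> \<sigma> B T N n a e x 0 \<omega> = x"
| "euler_scheme \<mu> \<sigma> B T N n a e x (Suc k) \<omega> =
     (let i = n + k; X = euler_scheme \<mu> \<sigma> B T N n a e x k \<omega> in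
        X + (T / real N) *\<^sub>R \<mu> (grid_time T N i) (X + e i \<omega>) (a i \<omega>)
          + \<sigma> (grid_time T N i) (X + e i \<omega>) (a i \<omega>)
              *v (B (grid_time T N (Suc i)) \<omega> - B (grid_time T N i) \<omega>))"

definition v_eps ::
  "'w measure \<Rightarrow> (real \<Rightarrow> 'w \<Rightarrow> real^'p) \<Rightarrow> (real \<Rightarrow> real^'d \<Rightarrow> 'c::topological_space \<Rightarrow> real^'d)
   \<Rightarrow> (real \<Rightarrow> real^'d \<Rightarrow> 'c \<Rightarrow> real^'p^'d) \<Rightarrow> 'c set \<Rightarrow> (real^'d \<Rightarrow> real) \<Rightarrow> real \<Rightarrow> nat
   \<Rightarrow> real \<Rightarrow> nat \<Rightarrow> real^'d \<Rightarrow> real" where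
  "v_eps M B \<mu> \<sigma> A \<psi> T N \<epsilon> n x =
     (SUP ae \<in> grid_controls M B T N A \<times> grid_perturbations M B T N \<epsilon>.
        (\<integral>\<omega>. \<psi> (euler_scheme \<mu> \<sigma> B T N n (fst ae) (snd ae) x (N - n) \<omega>) \<partial>M))"

definition v_tilde ::
  "'w measure \<Rightarrow> (real \<Rightarrow> 'w \<Rightarrow> real^'p) \<Rightarrow> (real \<Rightarrow> real^'d \<Rightarrow> 'c::topological_space \<Rightarrow> real^'d)
   \<Rightarrow> (real \<Rightarrow> real^'d \<Rightarrow> 'c \<Rightarrow> real^'p^'d) \<Rightarrow> 'c set \<Rightarrow> (real^'d \<Rightarrow> real) \<Rightarrow> real \<Rightarrow> nat
   \<Rightarrow> nat \<Rightarrow> real^'d \<Rightarrow> real" where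
  "v_tilde M B \<mu> \<sigma> A \<psi> T N n x =
     (SUP a \<in> grid_controls M B T N A.
        (\<integral>\<omega>. \<psi> (euler_scheme \<mu> \<sigma> B T N n a (\<lambda>_ _. 0) x (N - n) \<omega>) \<partial>M))"

end

theory Submission
  imports Defs
begin

lemma Sup_real_unbdd:
  fixes X :: "real set"
  assumes "\<not> bdd_above X"
  shows "Sup X = (LEAST z::real. False)"
proof -
  have "(\<lambda>z::real. \<forall>x\<in>X. x \<le> z) = (\<lambda>z. False)"
    using assms by (auto simp: bdd_above_def fun_eq_iff)
  then show ?thesis unfolding Sup_real_def by simp
qed

lemma sup_close:
  fixes f :: "'i \<Rightarrow> real" and g :: "'j \<Rightarrow> real"
  assumes c: "c \<ge> 0" and fg: "\<forall>i\<in>I. \<exists>j\<in>J. \<bar>f i - g j\<bar> \<le> c"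
    and gf: "\<forall>j\<in>J. \<exists>i\<in>I. \<bar>f i - g j\<bar> \<le> c"
  shows "\<bar>Sup (f`I) - Sup (g`J)\<bar> \<le> c"
proof (cases "I = {}")
  case True
  then have "J = {}" using gf by auto
  then show ?thesis using True c by simp
next
  case False
  then have J: "J \<noteq> {}" using fg by auto
  have bdd: "bdd_above (f`I) \<longleftrightarrow> bdd_above (g`J)"
  proof
    assume "bdd_above (f`I)"
    then obtain b where b: "\<forall>i\<in>I. f i \<le> b" by (auto simp: bdd_above_def)
    have "\<forall>j\<in>J. g j \<le> b + c"
    proof
      fix j assume "j \<in> J"
      then obtain i where "i \<in> I" "\<bar>f i - g j\<bar> \<le> c" using gf by blast
      then show "g j \<le> b + c" using b by force
    qed
    then show "bdd_above (g`J)" by (auto simp: bdd_above_def)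
  next
    assume "bdd_above (g`J)"
    then obtain b where b: "\<forall>j\<in>J. g j \<le> b" by (auto simp: bdd_above_def)
    have "\<forall>i\<in>I. f i \<le> b + c"
    proof
      fix i assume "i \<in> I"
      then obtain j where "j \<in> J" "\<bar>f i - g j\<bar> \<le> c" using fg by blast
      then show "f i \<le> b + c" using b by force
    qed
    then show "bdd_above (f`I)" by (auto simp: bdd_above_def)
  qed
  show ?thesis
  proof (cases "bdd_above (f`I)")
    case True
    then have Tg: "bdd_above (g`J)" using bdd by simp
    have 1: "Sup (f`I) \<le> Sup (g`J) + c"
    proof (rule cSUP_least[OF False])
      fix i assume "i \<in> I"
      then obtain j where "j \<in> J" "\<bar>f i - g j\<bar> \<le> c" using fg by blast
      moreover have "g j \<le> Sup (g`J)" using cSUP_upper[OF \<open>j \<in> J\<close> Tg] .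
      ultimately show "f i \<le> Sup (g`J) + c" by linarith
    qed
    have 2: "Sup (g`J) \<le> Sup (f`I) + c"
    proof (rule cSUP_least[OF J])
      fix j assume "j \<in> J"
      then obtain i where "i \<in> I" "\<bar>f i - g j\<bar> \<le> c" using gf by blast
      moreover have "f i \<le> Sup (f`I)" using cSUP_upper[OF \<open>i \<in> I\<close> True] .
      ultimately show "g j \<le> Sup (f`I) + c" by linarith
    qed
    from 1 2 show ?thesis by linarith
  next
    case False
    then have "\<not> bdd_above (g`J)" using bdd by simp
    with False show ?thesis using c by (simp add: Sup_real_unbdd)
  qed
qed

lemma bm_prob: "brownian_motion M B \<Longrightarrow> prob_space M"
  by (simp add: brownian_motion_def)

lemma bm_meas: "brownian_motion M B \<Longrightarrow> 0 \<le> t \<Longrightarrow> B t \<in> borel_measurable M"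
  by (simp add: brownian_motion_def)

lemma bm_zero: "brownian_motion M B \<Longrightarrow> \<omega> \<in> space M \<Longrightarrow> B 0 \<omega> = 0"
  by (simp add: brownian_motion_def)

lemma bm_indep_incr: "brownian_motion M B \<Longrightarrow> 0 \<le> u 0 \<Longrightarrow> (\<forall>i<k. u i < u (Suc i)) \<Longrightarrow>
   prob_space.indep_vars M (\<lambda>_. borel) (\<lambda>i \<omega>. B (u (Suc i)) \<omega> - B (u i) \<omega>) {..<k}"
  by (simp add: brownian_motion_def)

definition gen0 :: "'w measure \<Rightarrow> (real \<Rightarrow> 'w \<Rightarrow> real^'p) \<Rightarrow> real \<Rightarrow> 'w set set" where
  "gen0 M B t = {B r -` S \<inter> space M | r S. r \<in> {0..t} \<and> S \<in> sets borel}"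

lemma gen0_Pow: "gen0 M B t \<subseteq> Pow (space M)"
  by (auto simp: gen0_def)

lemma filt_space[simp]: "space (BM_filtration M B t) = space M"
  unfolding BM_filtration_def gen0_def[symmetric] by (rule space_measure_of[OF gen0_Pow])

lemma filt_sets: "sets (BM_filtration M B t) = sigma_sets (space M) (gen0 M B t)"
  unfolding BM_filtration_def gen0_def[symmetric] by (rule sets_measure_of[OF gen0_Pow])

lemma gen0_sub: "brownian_motion M B \<Longrightarrow> gen0 M B t \<subseteq> sets M"
  by (auto simp: gen0_def dest: bm_meas intro!: measurable_sets)

lemma filt_sub: "brownian_motion M B \<Longrightarrow> sets (BM_filtration M B t) \<subseteq> sets M"
  unfolding filt_sets using gen0_sub by (metis sets.sigma_sets_subset)

lemma filt_subalg: "brownian_motion M B \<Longrightarrow> subalgebra M (BM_filtration M B t)"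
  by (simp add: subalgebra_def filt_sub)

lemma filt_mono: "s \<le> t \<Longrightarrow> sets (BM_filtration M B s) \<subseteq> sets (BM_filtration M B t)"
  unfolding filt_sets
proof (rule sigma_sets_mono')
  assume "s \<le> t"
  then show "gen0 M B s \<subseteq> gen0 M B t"
    unfolding gen0_def by (smt (verit, best) Collect_mono_iff atLeastAtMost_iff)
qed

lemma filt_meas_B: "0 \<le> r \<Longrightarrow> r \<le> t \<Longrightarrow> B r \<in> borel_measurable (BM_filtration M B t)"
  by (rule measurableI) (auto simp: filt_sets gen0_def intro!: sigma_sets.Basic)

lemma meas_mono:
  assumes "s \<le> t" "f \<in> measurable (BM_filtration M B s) N"
  shows "f \<in> measurable (BM_filtration M B t) N"
  using assms filt_mono[OF assms(1), of M B] unfolding measurable_def by auto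

lemma meas_filt_M:
  assumes "brownian_motion M B" "f \<in> measurable (BM_filtration M B t) N"
  shows "f \<in> measurable M N"
  using measurable_from_subalg[OF filt_subalg[OF assms(1)] assms(2)] .

lemma cyl_indep:
  fixes B :: "real \<Rightarrow> 'w \<Rightarrow> real^'p"
  assumes BM: "brownian_motion M B" and t: "0 \<le> t" "t < s"
    and J: "finite J" "J \<subseteq> {0..t}" and X: "\<forall>r\<in>J. X r \<in> sets borel"
    and S: "S \<in> sets borel"
  shows "measure M ((space M \<inter> (\<Inter>r\<in>J. B r -` X r)) \<inter> ((\<lambda>\<omega>. B s \<omega> - B t \<omega>) -` S \<inter> space M))
       = measure M (space M \<inter> (\<Inter>r\<in>J. B r -` X r)) * measure M ((\<lambda>\<omega>. B s \<omega> - B t \<omega>) -` S \<inter> space M)"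
proof -
  interpret prob_space M using BM by (rule bm_prob)
  define L where "L = sorted_list_of_set (insert t J - {0})"
  define ul where "ul = 0 # L @ [s]"
  define u where "u k = ul ! k" for k
  define m where "m = length L"
  have finL: "finite (insert t J - {0})" using J by simp
  have setL: "set L = insert t J - {0}" using finL by (simp add: L_def)
  have sL: "sorted_wrt (<) L" by (simp add: L_def strict_sorted_list_of_set)
  have Lpos: "\<forall>x\<in>set L. 0 < x \<and> x \<le> t" using setL J t by auto
  have sul: "sorted_wrt (<) ul" unfolding ul_def using sL Lpos t by (auto simp: sorted_wrt_append)
  have lenul: "length ul = m + 2" by (simp add: ul_def m_def)
  have u_inc: "\<forall>i<Suc m. u i < u (Suc i)"
    using sorted_wrt_nth_less[OF sul] lenul by (simp add: u_def)
  have u0: "u 0 = 0" by (simp add: u_def ul_def)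
  have uSm: "u (Suc m) = s" by (simp add: u_def ul_def m_def nth_append)
  have uSuc: "u (Suc k) = L ! k" if "k < m" for k using that by (simp add: u_def ul_def m_def nth_append)
  have um: "u m = t"
  proof (cases "t = 0")
    case True
    have "set L = {}" using setL J True by auto
    then have "L = []" by simp
    then show ?thesis using True by (simp add: m_def u0)
  next
    case False
    then have "t \<in> set L" using setL by auto
    then obtain k where k: "k < m" "L ! k = t" by (auto simp: in_set_conv_nth m_def)
    have "k = m - 1"
    proof (rule ccontr)
      assume "k \<noteq> m - 1"
      then have "k < m - 1" using k by simp
      then have "L ! k < L ! (m - 1)" using sorted_wrt_nth_less[OF sL, of k "m - 1"] k by (simp add: m_def)
      moreover have "L ! (m - 1) \<in> set L" using k by (simp add: m_def)
      ultimately show False using Lpos k by force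
    qed
    moreover have "m = Suc (m - 1)" using k by simp
    ultimately show ?thesis using uSuc[of "m - 1"] k by (metis lessI)
  qed
  have uJ: "\<exists>k\<le>m. u k = r" if r: "r \<in> J" for r
  proof (cases "r = 0")
    case True then show ?thesis using u0 by auto
  next
    case False
    then have "r \<in> set L" using setL r by auto
    then obtain k where "k < m" "L ! k = r" by (auto simp: in_set_conv_nth m_def)
    then show ?thesis using uSuc by (intro exI[of _ "Suc k"]) auto
  qed
  define kk where "kk r = (SOME k. k \<le> m \<and> u k = r)" for r
  have kk: "kk r \<le> m \<and> u (kk r) = r" if "r \<in> J" for r
    unfolding kk_def using uJ[OF that] by (metis (mono_tags, lifting) someI_ex)
  define I where "I l \<omega> = B (u (Suc l)) \<omega> - B (u l) \<omega>" for l \<omega>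
  have ind: "indep_vars (\<lambda>_. borel) I {..<Suc m}"
    unfolding I_def using bm_indep_incr[OF BM, of u "Suc m"] u0 u_inc by simp
  define W where "W \<omega> = restrict (\<lambda>l. I l \<omega>) {..<m}" for \<omega>
  define R where "R \<omega> = restrict (\<lambda>l. I l \<omega>) {m}" for \<omega>
  have iv: "indep_var (PiM {..<m} (\<lambda>_. borel)) W (PiM {m} (\<lambda>_. borel)) R"
    unfolding W_def[abs_def] R_def[abs_def] by (rule indep_var_restrict[OF ind]) auto
  have Bsum: "B (u k) \<omega> = (\<Sum>l<k. I l \<omega>)" if "\<omega> \<in> space M" for k \<omega>
  proof (induction k)
    case 0 then show ?case using u0 bm_zero[OF BM that] by simp
  next
    case (Suc k) then show ?case by (simp add: I_def)
  qed
  define Xa where "Xa = {f \<in> space (PiM {..<m} (\<lambda>_. borel::(real^'p) measure)). \<forall>r\<in>J. (\<Sum>l<kk r. f l) \<in> X r}"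
  define Xb where "Xb = {g \<in> space (PiM {m} (\<lambda>_. borel::(real^'p) measure)). g m \<in> S}"
  have Xa_sets: "Xa \<in> sets (PiM {..<m} (\<lambda>_. borel))"
    unfolding Xa_def
  proof (rule sets.sets_Collect_finite_All[OF _ J(1)])
    fix r assume r: "r \<in> J"
    have "(\<lambda>f. \<Sum>l<kk r. f l) \<in> borel_measurable (PiM {..<m} (\<lambda>_. borel::(real^'p) measure))"
      using kk[OF r] by (intro borel_measurable_sum measurable_component_singleton) auto
    from measurable_sets[OF this, of "X r"] X r
    show "{f \<in> space (PiM {..<m} (\<lambda>_. borel::(real^'p) measure)). (\<Sum>l<kk r. f l) \<in> X r} \<in> sets (PiM {..<m} (\<lambda>_. borel))"
      by (simp add: Int_def conj_commute)
  qed
  have Xb_sets: "Xb \<in> sets (PiM {m} (\<lambda>_. borel))"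
  proof -
    have "(\<lambda>f. f m) \<in> borel_measurable (PiM {m} (\<lambda>_. borel::(real^'p) measure))"
      by (intro measurable_component_singleton) auto
    from measurable_sets[OF this S] show ?thesis
      unfolding Xb_def by (simp add: Int_def conj_commute)
  qed
  have eqA: "W -` Xa \<inter> space M = space M \<inter> (\<Inter>r\<in>J. B r -` X r)"
  proof (intro set_eqI iffI)
    fix \<omega> assume "\<omega> \<in> W -` Xa \<inter> space M"
    then have om: "\<omega> \<in> space M" and "\<forall>r\<in>J. (\<Sum>l<kk r. W \<omega> l) \<in> X r" by (auto simp: Xa_def)
    moreover have "(\<Sum>l<kk r. W \<omega> l) = B r \<omega>" if "r \<in> J" for r
      using kk[OF that] Bsum[OF om, of "kk r"] by (auto simp: W_def intro!: sum.cong)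
    ultimately show "\<omega> \<in> space M \<inter> (\<Inter>r\<in>J. B r -` X r)" by auto
  next
    fix \<omega> assume a: "\<omega> \<in> space M \<inter> (\<Inter>r\<in>J. B r -` X r)"
    then have om: "\<omega> \<in> space M" by auto
    have "(\<Sum>l<kk r. W \<omega> l) = B r \<omega>" if "r \<in> J" for r
      using kk[OF that] Bsum[OF om, of "kk r"] by (auto simp: W_def intro!: sum.cong)
    then show "\<omega> \<in> W -` Xa \<inter> space M" using a
      by (auto simp: Xa_def W_def space_PiM)
  qed
  have eqB: "R -` Xb \<inter> space M = (\<lambda>\<omega>. B s \<omega> - B t \<omega>) -` S \<inter> space M"
    by (auto simp: Xb_def R_def I_def uSm um space_PiM)
  have eqAB: "(\<lambda>x. (W x, R x)) -` (Xa \<times> Xb) \<inter> space M = (W -` Xa \<inter> space M) \<inter> (R -` Xb \<inter> space M)"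
    by auto
  from indep_varD[OF iv Xa_sets Xb_sets] show ?thesis
    unfolding eqAB eqA eqB by (simp add: Int_commute)
qed

lemma filt_indep:
  fixes B :: "real \<Rightarrow> 'w \<Rightarrow> real^'p"
  assumes BM: "brownian_motion M B" and t: "0 \<le> t" "t < s"
    and E: "E \<in> sets (BM_filtration M B t)" and S: "S \<in> sets borel"
  shows "measure M (E \<inter> ((\<lambda>\<omega>. B s \<omega> - B t \<omega>) -` S \<inter> space M))
       = measure M E * measure M ((\<lambda>\<omega>. B s \<omega> - B t \<omega>) -` S \<inter> space M)"
proof -
  interpret prob_space M using BM by (rule bm_prob)
  define Gen where "Gen = {space M \<inter> (\<Inter>r\<in>J. B r -` X r) | J X. finite J \<and> J \<subseteq> {0..t} \<and> (\<forall>r\<in>J. X r \<in> sets (borel :: (real^'p) measure))}"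
  define H where "H = {(\<lambda>\<omega>. B s \<omega> - B t \<omega>) -` S \<inter> space M | S. S \<in> sets (borel :: (real^'p) measure)}"
  have dB: "(\<lambda>\<omega>. B s \<omega> - B t \<omega>) \<in> borel_measurable M"
    using bm_meas[OF BM] t by (intro borel_measurable_diff) auto
  have Gen_ev: "Gen \<subseteq> events"
  proof
    fix a assume "a \<in> Gen"
    then obtain J X where a: "a = space M \<inter> (\<Inter>r\<in>J. B r -` X r)" and J: "finite J" "J \<subseteq> {0..t}"
      and X: "\<forall>r\<in>J. X r \<in> sets borel" unfolding Gen_def by blast
    have "a = {\<omega> \<in> space M. \<forall>r\<in>J. B r \<omega> \<in> X r}" using a by auto
    also have "\<dots> \<in> events"
    proof (rule sets.sets_Collect_finite_All[OF _ J(1)])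
      fix r assume r: "r \<in> J"
      then have "B r \<in> borel_measurable M" using J bm_meas[OF BM, of r] by auto
      from measurable_sets[OF this, of "X r"] X r
      show "{\<omega> \<in> space M. B r \<omega> \<in> X r} \<in> events" by (simp add: Int_def conj_commute)
    qed
    finally show "a \<in> events" .
  qed
  have H_ev: "H \<subseteq> events" unfolding H_def using measurable_sets[OF dB] by auto
  have ind: "indep_set Gen H"
    unfolding indep_sets2_eq
  proof (intro conjI Gen_ev H_ev ballI)
    fix a b assume "a \<in> Gen" "b \<in> H"
    then obtain J X S where a: "a = space M \<inter> (\<Inter>r\<in>J. B r -` X r)" and J: "finite J" "J \<subseteq> {0..t}"
      and X: "\<forall>r\<in>J. X r \<in> sets borel" and b: "b = (\<lambda>\<omega>. B s \<omega> - B t \<omega>) -` S \<inter> space M"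
      and S: "S \<in> sets borel"
      unfolding Gen_def H_def by blast
    show "prob (a \<inter> b) = prob a * prob b"
      unfolding a b by (rule cyl_indep[OF BM t J X S])
  qed
  have sGen: "Int_stable Gen"
  proof (rule Int_stableI)
    fix a b assume "a \<in> Gen" "b \<in> Gen"
    then obtain J1 X1 J2 X2 where a: "a = space M \<inter> (\<Inter>r\<in>J1. B r -` X1 r)" and J1: "finite J1" "J1 \<subseteq> {0..t}"
      and X1: "\<forall>r\<in>J1. X1 r \<in> sets borel" and b: "b = space M \<inter> (\<Inter>r\<in>J2. B r -` X2 r)"
      and J2: "finite J2" "J2 \<subseteq> {0..t}" and X2: "\<forall>r\<in>J2. X2 r \<in> sets borel"
      unfolding Gen_def by blast
    define X where "X r = (if r \<in> J1 then X1 r else UNIV) \<inter> (if r \<in> J2 then X2 r else UNIV)" for r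
    have "a \<inter> b = space M \<inter> (\<Inter>r\<in>J1 \<union> J2. B r -` X r)"
    proof (intro set_eqI iffI)
      fix x assume "x \<in> a \<inter> b" then show "x \<in> space M \<inter> (\<Inter>r\<in>J1 \<union> J2. B r -` X r)"
        unfolding a b X_def by auto
    next
      fix x assume x: "x \<in> space M \<inter> (\<Inter>r\<in>J1 \<union> J2. B r -` X r)"
      have xr: "B r x \<in> X r" if "r \<in> J1 \<union> J2" for r using x that by blast
      have "B r x \<in> X1 r" if "r \<in> J1" for r using xr[of r] that by (simp add: X_def)
      moreover have "B r x \<in> X2 r" if "r \<in> J2" for r using xr[of r] that by (simp add: X_def)
      ultimately show "x \<in> a \<inter> b" using x unfolding a b by auto
    qed
    moreover have "\<forall>r\<in>J1 \<union> J2. X r \<in> sets (borel :: (real^'p) measure)"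
      using X1 X2 by (auto simp: X_def)
    ultimately show "a \<inter> b \<in> Gen" unfolding Gen_def using J1 J2
      by (intro CollectI exI[of _ "J1 \<union> J2"] exI[of _ X]) auto
  qed
  have sH: "Int_stable H"
  proof (rule Int_stableI)
    fix a b assume "a \<in> H" "b \<in> H"
    then obtain S1 S2 where "a = (\<lambda>\<omega>. B s \<omega> - B t \<omega>) -` S1 \<inter> space M" "S1 \<in> sets borel"
      "b = (\<lambda>\<omega>. B s \<omega> - B t \<omega>) -` S2 \<inter> space M" "S2 \<in> sets borel" unfolding H_def by blast
    then show "a \<inter> b \<in> H" unfolding H_def by (intro CollectI exI[of _ "S1 \<inter> S2"]) auto
  qed
  have "indep_sets (\<lambda>i. sigma_sets (space M) (case_bool Gen H i)) UNIV"
    using ind unfolding indep_set_def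
    by (rule indep_sets_sigma) (simp add: sGen sH split: bool.split)
  moreover have "(\<lambda>i. sigma_sets (space M) (case_bool Gen H i)) = case_bool (sigma_sets (space M) Gen) (sigma_sets (space M) H)"
    by (rule ext) (simp split: bool.split)
  ultimately have ind2: "indep_set (sigma_sets (space M) Gen) (sigma_sets (space M) H)"
    unfolding indep_set_def by simp
  have "gen0 M B t \<subseteq> Gen"
  proof
    fix a assume "a \<in> gen0 M B t"
    then obtain r S where a: "a = B r -` S \<inter> space M" "r \<in> {0..t}" "S \<in> sets borel"
      unfolding gen0_def by blast
    then have "a = space M \<inter> (\<Inter>r'\<in>{r}. B r' -` (\<lambda>_. S) r')" by auto
    then show "a \<in> Gen" unfolding Gen_def using a
      by (intro CollectI exI[of _ "{r}"] exI[of _ "\<lambda>_. S"]) auto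
  qed
  then have "E \<in> sigma_sets (space M) Gen"
    using E unfolding filt_sets by (meson sigma_sets_mono' subsetD)
  moreover have "(\<lambda>\<omega>. B s \<omega> - B t \<omega>) -` S \<inter> space M \<in> sigma_sets (space M) H"
    using S unfolding H_def by (intro sigma_sets.Basic) blast
  ultimately show ?thesis using ind2 unfolding indep_sets2_eq by simp
qed

lemma filt_indep_var:
  fixes B :: "real \<Rightarrow> 'w \<Rightarrow> real^'p" and Z :: "'w \<Rightarrow> real" and g :: "real^'p \<Rightarrow> real"
  assumes BM: "brownian_motion M B" and t: "0 \<le> t" "t < s"
    and Z: "Z \<in> borel_measurable (BM_filtration M B t)" and g: "g \<in> borel_measurable borel"
  shows "prob_space.indep_var M borel Z borel (\<lambda>\<omega>. g (B s \<omega> - B t \<omega>))"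
proof -
  interpret prob_space M using BM by (rule bm_prob)
  have dB: "(\<lambda>\<omega>. B s \<omega> - B t \<omega>) \<in> borel_measurable M"
    using bm_meas[OF BM] t by (intro borel_measurable_diff) auto
  have ZM: "Z \<in> borel_measurable M" by (rule meas_filt_M[OF BM Z])
  have YM: "(\<lambda>\<omega>. g (B s \<omega> - B t \<omega>)) \<in> borel_measurable M"
    using measurable_compose[OF dB g] .
  let ?Y = "\<lambda>\<omega>. g (B s \<omega> - B t \<omega>)"
  have s1: "sigma_sets (space M) {Z -` A \<inter> space M | A. A \<in> sets borel} \<subseteq> sets (BM_filtration M B t)"
  proof -
    have "{Z -` A \<inter> space M | A. A \<in> sets borel} \<subseteq> sets (BM_filtration M B t)"
      using measurable_sets[OF Z] by auto
    from sets.sigma_sets_subset[OF this] show ?thesis by simp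
  qed
  have s2: "b \<in> {(\<lambda>\<omega>. B s \<omega> - B t \<omega>) -` S \<inter> space M | S. S \<in> sets borel}"
    if b: "b \<in> sigma_sets (space M) {?Y -` A \<inter> space M | A. A \<in> sets borel}" for b
  proof -
    have "?Y \<in> space M \<rightarrow> (UNIV :: real set)" by simp
    from sigma_sets_vimage_commute[OF this, of "sets borel"] b
    have "b \<in> {?Y -` A \<inter> space M |A. A \<in> sigma_sets UNIV (sets borel)}" by simp
    then obtain A where A: "A \<in> sigma_sets UNIV (sets borel)" "b = ?Y -` A \<inter> space M" by blast
    have "sigma_sets UNIV (sets (borel :: real measure)) = sets borel"
      using sets.sigma_sets_eq[of "borel :: real measure"] by simp
    then have Ab: "A \<in> sets borel" using A by simp
    have "g -` A \<in> sets borel" using measurable_sets[OF g Ab] by simp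
    moreover have "b = (\<lambda>\<omega>. B s \<omega> - B t \<omega>) -` (g -` A) \<inter> space M" using A by auto
    ultimately show ?thesis by blast
  qed
  show ?thesis
    unfolding indep_var_eq
  proof (intro conjI ZM YM)
    show "indep_set (sigma_sets (space M) {Z -` A \<inter> space M | A. A \<in> sets borel})
      (sigma_sets (space M) {?Y -` A \<inter> space M | A. A \<in> sets borel})"
      unfolding indep_sets2_eq
    proof (intro conjI ballI)
      show "sigma_sets (space M) {Z -` A \<inter> space M | A. A \<in> sets borel} \<subseteq> events"
        using s1 filt_sub[OF BM] by blast
      show "sigma_sets (space M) {?Y -` A \<inter> space M | A. A \<in> sets borel} \<subseteq> events"
      proof
        fix b assume "b \<in> sigma_sets (space M) {?Y -` A \<inter> space M | A. A \<in> sets borel}"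
        from s2[OF this] obtain S where "b = (\<lambda>\<omega>. B s \<omega> - B t \<omega>) -` S \<inter> space M" "S \<in> sets borel"
          by blast
        then show "b \<in> events" using measurable_sets[OF dB] by simp
      qed
    next
      fix a b assume a: "a \<in> sigma_sets (space M) {Z -` A \<inter> space M | A. A \<in> sets borel}"
        and b: "b \<in> sigma_sets (space M) {?Y -` A \<inter> space M | A. A \<in> sets borel}"
      from s2[OF b] obtain S where S: "b = (\<lambda>\<omega>. B s \<omega> - B t \<omega>) -` S \<inter> space M" "S \<in> sets borel" by blast
      show "prob (a \<inter> b) = prob a * prob b"
        unfolding S(1) by (rule filt_indep[OF BM t _ S(2)]) (rule subsetD[OF s1 a])
    qed
  qed
qed

lemma nn_integral_lborel_vec:
  fixes G :: "'n::finite \<Rightarrow> real \<Rightarrow> ennreal"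
  assumes [measurable]: "\<And>i. G i \<in> borel_measurable borel"
  shows "(\<integral>\<^sup>+z. (\<Prod>i\<in>UNIV. G i (z $ i)) \<partial>(lborel :: (real^'n) measure)) = (\<Prod>i\<in>UNIV. \<integral>\<^sup>+x. G i x \<partial>lborel)"
proof -
  define H where "H b = G (SOME i. b = axis i 1)" for b :: "real^'n"
  have Hax: "H (axis i 1) = G i" for i
    unfolding H_def by (rule arg_cong[where f=G], rule some_equality) (auto simp: axis_eq_axis)
  have B: "(Basis :: (real^'n) set) = (\<lambda>i. axis i 1) ` UNIV" by (auto simp: Basis_vec_def)
  have inj: "inj (\<lambda>i::'n. axis i (1::real))" by (auto simp: inj_def axis_eq_axis)
  have "(\<integral>\<^sup>+z. (\<Prod>i\<in>UNIV. G i (z $ i)) \<partial>lborel) = (\<integral>\<^sup>+z. (\<Prod>b\<in>Basis. H b (z \<bullet> b)) \<partial>(lborel :: (real^'n) measure))"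
    by (simp add: B prod.reindex[OF inj] Hax inner_axis)
  also have "\<dots> = (\<Prod>b\<in>Basis. \<integral>\<^sup>+x. H b x \<partial>lborel)"
    by (rule nn_integral_lborel_prod) (auto simp: H_def)
  also have "\<dots> = (\<Prod>i\<in>UNIV. \<integral>\<^sup>+x. G i x \<partial>lborel)"
    by (simp add: B prod.reindex[OF inj] Hax)
  finally show ?thesis .
qed

lemma lborel_uminus_vec: "distr lborel borel uminus = (lborel :: (real^'n) measure)"
proof -
  note lborel_affine[of "-1" "0::real^'n"]
  then have "(lborel :: (real^'n) measure) = density (distr lborel borel uminus) (\<lambda>_. 1)"
    by simp
  then show ?thesis by (simp add: density_1)
qed

lemma norm_sq_vec: "(norm (z :: real^'n))^2 = (\<Sum>i\<in>UNIV. (z $ i)^2)"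
  by (simp add: norm_vec_def L2_set_def sum_nonneg)

lemma bm_incr_moments:
  fixes B :: "real \<Rightarrow> 'w \<Rightarrow> real^'p"
  assumes BM: "brownian_motion M B" and t: "0 \<le> t" "t < s"
  shows "integrable M (\<lambda>\<omega>. (norm (B s \<omega> - B t \<omega>))^2)"
    and "(\<integral>\<omega>. (norm (B s \<omega> - B t \<omega>))^2 \<partial>M) = real CARD('p) * (s - t)"
    and "(\<integral>\<omega>. (B s \<omega> - B t \<omega>) $ k \<partial>M) = 0"
proof -
  define \<sigma> where "\<sigma> = sqrt (s - t)"
  have \<sigma>: "0 < \<sigma>" using t by (simp add: \<sigma>_def)
  have \<sigma>2: "\<sigma>^2 = s - t" using t by (simp add: \<sigma>_def)
  define f where "f z = (\<Prod>i\<in>UNIV. normal_density 0 \<sigma> (z $ i))" for z :: "real^'p"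
  have D: "distributed M lborel (\<lambda>\<omega>. B s \<omega> - B t \<omega>) (\<lambda>z. ennreal (f z))"
    using BM t unfolding brownian_motion_def f_def \<sigma>_def by auto
  have fpos: "0 \<le> f z" for z unfolding f_def by (intro prod_nonneg) (simp add: normal_density_nonneg)
  have fmeas[measurable]: "f \<in> borel_measurable borel" unfolding f_def by measurable
  have comp: "has_bochner_integral lborel (\<lambda>z. f z * (z $ k)^2) (\<sigma>^2)" for k
  proof (rule has_bochner_integral_nn_integral)
    show "(\<lambda>z. f z * (z $ k)^2) \<in> borel_measurable lborel" by measurable
    show "AE x in lborel. 0 \<le> f x * (x $ k)^2" using fpos by simp
    show "0 \<le> \<sigma>^2" by simp
    define G where "G i x = ennreal (normal_density 0 \<sigma> x * (if i = k then x^2 else 1))" for i x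
    have Gm[measurable]: "G i \<in> borel_measurable borel" for i unfolding G_def by measurable
    have "(\<lambda>z. ennreal (f z * (z $ k)^2)) = (\<lambda>z. \<Prod>i\<in>UNIV. G i (z $ i))"
    proof
      fix z :: "real^'p"
      have "(\<Prod>i\<in>UNIV. G i (z $ i)) = ennreal (\<Prod>i\<in>UNIV. normal_density 0 \<sigma> (z $ i) * (if i = k then (z $ i)^2 else 1))"
        unfolding G_def by (rule prod_ennreal) (simp add: normal_density_nonneg)
      also have "(\<Prod>i\<in>UNIV. normal_density 0 \<sigma> (z $ i) * (if i = k then (z $ i)^2 else 1)) = f z * (z $ k)^2"
        unfolding f_def prod.distrib by (simp add: prod.delta)
      finally show "ennreal (f z * (z $ k)^2) = (\<Prod>i\<in>UNIV. G i (z $ i))" by simp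
    qed
    then have "(\<integral>\<^sup>+z. ennreal (f z * (z $ k)^2) \<partial>lborel) = (\<Prod>i\<in>UNIV. \<integral>\<^sup>+x. G i x \<partial>lborel)"
      using nn_integral_lborel_vec[of G] by simp
    also have "\<dots> = (\<Prod>i\<in>UNIV. ennreal (if i = k then \<sigma>^2 else 1))"
    proof (rule prod.cong[OF refl])
      fix i
      show "(\<integral>\<^sup>+x. G i x \<partial>lborel) = ennreal (if i = k then \<sigma>^2 else 1)"
      proof (cases "i = k")
        case True
        have "(\<integral>\<^sup>+x. ennreal (normal_density 0 \<sigma> x * x^2) \<partial>lborel) = ennreal (\<integral>x. normal_density 0 \<sigma> x * x^2 \<partial>lborel)"
          using integrable_normal_moment[OF \<sigma>, of 0 2]
          by (intro nn_integral_eq_integral) (auto simp: normal_density_nonneg)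
        also have "(\<integral>x. normal_density 0 \<sigma> x * x^2 \<partial>lborel) = \<sigma>^2"
          using integral_normal_moment_even[OF \<sigma>, of 0 1] by (simp add: power2_eq_square field_simps)
        finally show ?thesis using True by (simp add: G_def)
      next
        case False
        have "(\<integral>\<^sup>+x. ennreal (normal_density 0 \<sigma> x) \<partial>lborel) = ennreal (\<integral>x. normal_density 0 \<sigma> x \<partial>lborel)"
          using integrable_normal_density[OF \<sigma>]
          by (intro nn_integral_eq_integral) (auto simp: normal_density_nonneg)
        then show ?thesis using False \<sigma> by (simp add: G_def)
      qed
    qed
    also have "\<dots> = (\<Prod>i\<in>UNIV. if i = k then ennreal (\<sigma>^2) else 1)"
      by (rule prod.cong) auto
    also have "\<dots> = ennreal (\<sigma>^2)"
      by (subst prod.delta) auto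
    finally show "(\<integral>\<^sup>+z. ennreal (f z * (z $ k)^2) \<partial>lborel) = ennreal (\<sigma>^2)" .
  qed
  have tot: "has_bochner_integral lborel (\<lambda>z. f z * (norm z)^2) (real CARD('p) * \<sigma>^2)"
  proof -
    have "has_bochner_integral lborel (\<lambda>z. \<Sum>k\<in>UNIV. f z * (z $ k)^2) (\<Sum>k\<in>(UNIV::'p set). \<sigma>^2)"
      by (rule has_bochner_integral_sum) (use comp in auto)
    then show ?thesis by (simp add: norm_sq_vec sum_distrib_left)
  qed
  have "integrable lborel (\<lambda>z. f z * (norm z)^2)" using tot by (rule integrable.intros)
  then show "integrable M (\<lambda>\<omega>. (norm (B s \<omega> - B t \<omega>))^2)"
    using distributed_integrable[OF D, of "\<lambda>z. (norm z)^2"] fpos by simp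
  show "(\<integral>\<omega>. (norm (B s \<omega> - B t \<omega>))^2 \<partial>M) = real CARD('p) * (s - t)"
    using distributed_integral[OF D, of "\<lambda>z. (norm z)^2"] fpos has_bochner_integral_integral_eq[OF tot] \<sigma>2
    by simp
  have fsym: "f (- z) = f z" for z unfolding f_def by (simp add: normal_density_def)
  have "(\<integral>z. f z * z $ k \<partial>lborel) = (\<integral>z. f z * z $ k \<partial>(distr lborel borel uminus))"
    by (simp add: lborel_uminus_vec)
  also have "\<dots> = (\<integral>z. f (- z) * (- z) $ k \<partial>lborel)"
    by (rule integral_distr) auto
  also have "\<dots> = - (\<integral>z. f z * z $ k \<partial>lborel)"
    by (simp add: fsym)
  finally have "(\<integral>z. f z * z $ k \<partial>lborel) = 0" by simp
  then show "(\<integral>\<omega>. (B s \<omega> - B t \<omega>) $ k \<partial>M) = 0"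
    using distributed_integral[OF D, of "\<lambda>z. z $ k"] fpos by simp
qed

lemma meas_vec_nth:
  "f \<in> borel_measurable M \<Longrightarrow> (\<lambda>\<omega>. (f \<omega> :: 'a::real_normed_vector^'n) $ k) \<in> borel_measurable M"
  by (rule borel_measurable_continuous_on[OF continuous_on_component]) (auto intro: continuous_on_id)

lemma meas_vec_lambda:
  fixes f :: "'w \<Rightarrow> 'n::finite \<Rightarrow> real"
  assumes "\<And>i. (\<lambda>\<omega>. f \<omega> i) \<in> borel_measurable M"
  shows "(\<lambda>\<omega>. \<chi> i. f \<omega> i) \<in> borel_measurable M"
  unfolding borel_measurable_euclidean_space[where 'c="real^'n"]
  using assms by (auto simp: Basis_vec_def inner_axis)

lemma meas_mv: "(S::'w \<Rightarrow> real^'p^'d) \<in> borel_measurable M \<Longrightarrow> (x::'w \<Rightarrow> real^'p) \<in> borel_measurable M \<Longrightarrow> (\<lambda>\<omega>. S \<omega> *v x \<omega>) \<in> borel_measurable M"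
  unfolding matrix_vector_mult_def by (intro meas_vec_lambda borel_measurable_sum borel_measurable_times meas_vec_nth)

lemma meas_vm: "(U::'w \<Rightarrow> real^'d) \<in> borel_measurable M \<Longrightarrow> (S::'w \<Rightarrow> real^'p^'d) \<in> borel_measurable M \<Longrightarrow>  (\<lambda>\<omega>. U \<omega> v* S \<omega>) \<in> borel_measurable M"
  unfolding vector_matrix_mult_def by (intro meas_vec_lambda borel_measurable_sum borel_measurable_times meas_vec_nth)

lemma norm_sq_mat: "(norm (S :: real^'p^'d))^2 = (\<Sum>j\<in>UNIV. (norm (S $ j))^2)"
  by (simp add: norm_vec_def L2_set_def sum_nonneg)

lemma norm_mv_le:
  fixes S :: "real^'p^'d" and x :: "real^'p"
  shows "norm (S *v x) \<le> norm S * norm x"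
proof -
  have c: "(S *v x) $ j = S $ j \<bullet> x" for j by (simp add: matrix_vector_mult_def inner_vec_def)
  have "(norm (S *v x))^2 = (\<Sum>j\<in>UNIV. (S $ j \<bullet> x)^2)" by (simp add: norm_sq_vec c)
  also have "\<dots> \<le> (\<Sum>j\<in>UNIV. (norm (S $ j))^2 * (norm x)^2)"
  proof (rule sum_mono)
    fix j
    have "\<bar>S $ j \<bullet> x\<bar> \<le> norm (S $ j) * norm x" by (rule Cauchy_Schwarz_ineq2)
    from power_mono[OF this, of 2] show "(S $ j \<bullet> x)^2 \<le> (norm (S $ j))^2 * (norm x)^2"
      by (simp add: power_mult_distrib)
  qed
  also have "\<dots> = (norm S * norm x)^2"
    by (simp add: norm_sq_mat power_mult_distrib sum_distrib_right)
  finally show ?thesis by (rule power2_le_imp_le) simp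
qed

lemma norm_add_sq: "(norm (a + b :: 'a::real_inner))^2 = (norm a)^2 + 2 * (a \<bullet> b) + (norm b)^2"
  by (simp add: power2_norm_eq_inner inner_add algebra_simps inner_commute)

lemma vm_comp_bound:
  fixes U :: "real^'d" and S :: "real^'p^'d"
  shows "\<bar>(U v* S) $ k\<bar> \<le> real CARD('d) * ((norm U)^2 + (norm S)^2)"
proof -
  have "\<bar>(U v* S) $ k\<bar> = \<bar>\<Sum>j\<in>UNIV. S $ j $ k * U $ j\<bar>" by (simp add: vector_matrix_mult_def mult.commute)
  also have "\<dots> \<le> (\<Sum>j\<in>(UNIV::'d set). (norm U)^2 + (norm S)^2)"
  proof (rule order_trans[OF sum_abs], rule sum_mono)
    fix j
    have "\<bar>S $ j $ k\<bar> \<le> norm (S $ j)" by (rule component_le_norm_cart)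
    also have "\<dots> \<le> norm S" unfolding norm_vec_def[of S] by (rule member_le_L2_set) simp_all
    finally have a: "\<bar>S $ j $ k\<bar> \<le> norm S" .
    have b: "\<bar>U $ j\<bar> \<le> norm U" by (rule component_le_norm_cart)
    have "\<bar>S $ j $ k * U $ j\<bar> \<le> norm S * norm U"
      unfolding abs_mult by (rule mult_mono[OF a b]) auto
    also have "\<dots> \<le> (norm U)^2 + (norm S)^2"
    proof -
      have "0 \<le> (norm U - norm S)^2" by simp
      then have h: "2 * (norm S * norm U) \<le> (norm U)^2 + (norm S)^2"
        by (simp add: power2_eq_square algebra_simps)
      have "0 \<le> norm S * norm U" by simp
      with h show ?thesis by linarith
    qed
    finally show "\<bar>S $ j $ k * U $ j\<bar> \<le> (norm U)^2 + (norm S)^2" .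
  qed
  finally show ?thesis by simp
qed

lemma step_L2:
  fixes B :: "real \<Rightarrow> 'w \<Rightarrow> real^'p" and U :: "'w \<Rightarrow> real^'d" and S :: "'w \<Rightarrow> real^'p^'d"
  assumes BM: "brownian_motion M B" and t: "0 \<le> t" "t < s"
    and Uf: "U \<in> borel_measurable (BM_filtration M B t)" and Sf: "S \<in> borel_measurable (BM_filtration M B t)"
    and iU: "integrable M (\<lambda>\<omega>. (norm (U \<omega>))^2)" and iS: "integrable M (\<lambda>\<omega>. (norm (S \<omega>))^2)"
  shows "integrable M (\<lambda>\<omega>. (norm (U \<omega> + S \<omega> *v (B s \<omega> - B t \<omega>)))^2)"
    and "(\<integral>\<omega>. (norm (U \<omega> + S \<omega> *v (B s \<omega> - B t \<omega>)))^2 \<partial>M)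
          \<le> (\<integral>\<omega>. (norm (U \<omega>))^2 \<partial>M) + real CARD('p) * (s - t) * (\<integral>\<omega>. (norm (S \<omega>))^2 \<partial>M)"
proof -
  interpret prob_space M using BM by (rule bm_prob)
  define \<Delta> where "\<Delta> \<omega> = B s \<omega> - B t \<omega>" for \<omega>
  define V where "V \<omega> = S \<omega> *v \<Delta> \<omega>" for \<omega>
  define W where "W \<omega> = U \<omega> v* S \<omega>" for \<omega>
  have UM[measurable]: "U \<in> borel_measurable M" by (rule meas_filt_M[OF BM Uf])
  have SM[measurable]: "S \<in> borel_measurable M" by (rule meas_filt_M[OF BM Sf])
  have \<Delta>M[measurable]: "\<Delta> \<in> borel_measurable M"
    unfolding \<Delta>_def[abs_def] using bm_meas[OF BM] t by (intro borel_measurable_diff) auto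
  have VM[measurable]: "V \<in> borel_measurable M" unfolding V_def[abs_def] by (rule meas_mv[OF SM \<Delta>M])
  have WF: "W \<in> borel_measurable (BM_filtration M B t)" unfolding W_def[abs_def] by (rule meas_vm[OF Uf Sf])
  have WM[measurable]: "W \<in> borel_measurable M" by (rule meas_filt_M[OF BM WF])
  note mom = bm_incr_moments[OF BM t]
  have i\<Delta>2: "integrable M (\<lambda>\<omega>. (norm (\<Delta> \<omega>))^2)" using mom(1) by (simp add: \<Delta>_def)
  have E\<Delta>2: "(\<integral>\<omega>. (norm (\<Delta> \<omega>))^2 \<partial>M) = real CARD('p) * (s - t)" using mom(2) by (simp add: \<Delta>_def)
  have E\<Delta>k: "(\<integral>\<omega>. \<Delta> \<omega> $ k \<partial>M) = 0" for k using mom(3) by (simp add: \<Delta>_def)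
  have i\<Delta>k: "integrable M (\<lambda>\<omega>. \<Delta> \<omega> $ k)" for k
  proof (rule Bochner_Integration.integrable_bound)
    show "integrable M (\<lambda>\<omega>. 1 + (norm (\<Delta> \<omega>))^2)" using i\<Delta>2 by simp
    show "(\<lambda>\<omega>. \<Delta> \<omega> $ k) \<in> borel_measurable M" by (rule meas_vec_nth[OF \<Delta>M])
    show "AE \<omega> in M. norm (\<Delta> \<omega> $ k) \<le> norm (1 + (norm (\<Delta> \<omega>))^2)"
    proof (rule AE_I2)
      fix \<omega>
      have "\<bar>\<Delta> \<omega> $ k\<bar> \<le> norm (\<Delta> \<omega>)" by (rule component_le_norm_cart)
      moreover have "norm (\<Delta> \<omega>) \<le> 1 + (norm (\<Delta> \<omega>))^2"
      proof -
        have "0 \<le> (norm (\<Delta> \<omega>) - 1)^2" by simp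
        then have "2 * norm (\<Delta> \<omega>) \<le> 1 + (norm (\<Delta> \<omega>))^2" by (simp add: power2_eq_square algebra_simps)
        moreover have "0 \<le> (norm (\<Delta> \<omega>))^2" by simp
        ultimately show ?thesis by linarith
      qed
      ultimately show "norm (\<Delta> \<omega> $ k) \<le> norm (1 + (norm (\<Delta> \<omega>))^2)" by simp
    qed
  qed
  have SF2: "(\<lambda>\<omega>. (norm (S \<omega>))^2) \<in> borel_measurable (BM_filtration M B t)"
    using measurable_compose[OF Sf borel_measurable_norm] by (intro borel_measurable_power) simp
  have ind1: "indep_var borel (\<lambda>\<omega>. (norm (S \<omega>))^2) borel (\<lambda>\<omega>. (norm (\<Delta> \<omega>))^2)"
    unfolding \<Delta>_def by (rule filt_indep_var[OF BM t SF2]) (intro borel_measurable_power borel_measurable_norm measurable_ident)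
  have iSD: "integrable M (\<lambda>\<omega>. (norm (S \<omega>))^2 * (norm (\<Delta> \<omega>))^2)"
    by (rule indep_var_integrable[OF ind1 iS i\<Delta>2])
  have ESD: "(\<integral>\<omega>. (norm (S \<omega>))^2 * (norm (\<Delta> \<omega>))^2 \<partial>M) = (\<integral>\<omega>. (norm (S \<omega>))^2 \<partial>M) * (real CARD('p) * (s - t))"
    using indep_var_lebesgue_integral[OF ind1 iS i\<Delta>2] E\<Delta>2 by simp
  have Vle: "(norm (V \<omega>))^2 \<le> (norm (S \<omega>))^2 * (norm (\<Delta> \<omega>))^2" for \<omega>
  proof -
    have "norm (V \<omega>) \<le> norm (S \<omega>) * norm (\<Delta> \<omega>)" unfolding V_def by (rule norm_mv_le)
    from power_mono[OF this, of 2] show ?thesis by (simp add: power_mult_distrib)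
  qed
  have iV: "integrable M (\<lambda>\<omega>. (norm (V \<omega>))^2)"
  proof (rule Bochner_Integration.integrable_bound[OF iSD])
    show "(\<lambda>\<omega>. (norm (V \<omega>))^2) \<in> borel_measurable M" by measurable
    show "AE \<omega> in M. norm ((norm (V \<omega>))^2) \<le> norm ((norm (S \<omega>))^2 * (norm (\<Delta> \<omega>))^2)"
      using Vle by simp
  qed
  have EV: "(\<integral>\<omega>. (norm (V \<omega>))^2 \<partial>M) \<le> (\<integral>\<omega>. (norm (S \<omega>))^2 \<partial>M) * (real CARD('p) * (s - t))"
    unfolding ESD[symmetric] by (rule integral_mono[OF iV iSD Vle])
  have iWk: "integrable M (\<lambda>\<omega>. W \<omega> $ k)" for k
  proof (rule Bochner_Integration.integrable_bound)
    show "integrable M (\<lambda>\<omega>. real CARD('d) * ((norm (U \<omega>))^2 + (norm (S \<omega>))^2))"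
      using iU iS by simp
    show "(\<lambda>\<omega>. W \<omega> $ k) \<in> borel_measurable M" by (rule meas_vec_nth[OF WM])
    show "AE \<omega> in M. norm (W \<omega> $ k) \<le> norm (real CARD('d) * ((norm (U \<omega>))^2 + (norm (S \<omega>))^2))"
      by (intro AE_I2) (simp add: W_def vm_comp_bound)
  qed
  have indk: "indep_var borel (\<lambda>\<omega>. W \<omega> $ k) borel (\<lambda>\<omega>. \<Delta> \<omega> $ k)" for k
    unfolding \<Delta>_def by (rule filt_indep_var[OF BM t meas_vec_nth[OF WF]]) (rule meas_vec_nth, simp)
  have iWDk: "integrable M (\<lambda>\<omega>. W \<omega> $ k * \<Delta> \<omega> $ k)" for k
    by (rule indep_var_integrable[OF indk iWk i\<Delta>k])
  have EWDk: "(\<integral>\<omega>. W \<omega> $ k * \<Delta> \<omega> $ k \<partial>M) = 0" for k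
    using indep_var_lebesgue_integral[OF indk iWk i\<Delta>k] E\<Delta>k by simp
  have UV: "U \<omega> \<bullet> V \<omega> = (\<Sum>k\<in>UNIV. W \<omega> $ k * \<Delta> \<omega> $ k)" for \<omega>
    unfolding V_def W_def dot_lmul_matrix[symmetric] by (simp add: inner_vec_def)
  have iUV: "integrable M (\<lambda>\<omega>. U \<omega> \<bullet> V \<omega>)"
    unfolding UV using iWDk by (intro Bochner_Integration.integrable_sum) auto
  have EUV: "(\<integral>\<omega>. U \<omega> \<bullet> V \<omega> \<partial>M) = 0"
    unfolding UV using iWDk EWDk by (subst Bochner_Integration.integral_sum) auto
  have eq: "(\<lambda>\<omega>. (norm (U \<omega> + S \<omega> *v (B s \<omega> - B t \<omega>)))^2)
      = (\<lambda>\<omega>. ((norm (U \<omega>))^2 + 2 * (U \<omega> \<bullet> V \<omega>)) + (norm (V \<omega>))^2)"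
    unfolding V_def \<Delta>_def by (simp add: norm_add_sq)
  show "integrable M (\<lambda>\<omega>. (norm (U \<omega> + S \<omega> *v (B s \<omega> - B t \<omega>)))^2)"
    unfolding eq using iU iUV iV by auto
  have "(\<integral>\<omega>. (norm (U \<omega> + S \<omega> *v (B s \<omega> - B t \<omega>)))^2 \<partial>M)
      = (\<integral>\<omega>. (norm (U \<omega>))^2 \<partial>M) + 2 * (\<integral>\<omega>. U \<omega> \<bullet> V \<omega> \<partial>M) + (\<integral>\<omega>. (norm (V \<omega>))^2 \<partial>M)"
    unfolding eq using iU iUV iV by simp
  then show "(\<integral>\<omega>. (norm (U \<omega> + S \<omega> *v (B s \<omega> - B t \<omega>)))^2 \<partial>M)
          \<le> (\<integral>\<omega>. (norm (U \<omega>))^2 \<partial>M) + real CARD('p) * (s - t) * (\<integral>\<omega>. (norm (S \<omega>))^2 \<partial>M)"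
    using EUV EV by (simp add: algebra_simps)
qed

lemma sq_sum_le: "((r::real) + d)^2 \<le> 2 * (r^2 + d^2)"
proof -
  have "0 \<le> (r - d)^2" by simp
  then show ?thesis by (simp add: power2_eq_square algebra_simps)
qed

lemma arith_S:
  fixes r d C sS :: real
  assumes "0 \<le> C" "sS \<le> C*(r+d)" "0 \<le> sS"
  shows "sS^2 \<le> 2*C^2*(r^2+d^2)"
proof -
  have "sS^2 \<le> (C*(r+d))^2" by (rule power_mono) (use assms in auto)
  also have "\<dots> = C^2 * (r+d)^2" by (simp add: power_mult_distrib)
  also have "\<dots> \<le> C^2 * (2*(r^2+d^2))" by (rule mult_left_mono[OF sq_sum_le]) simp
  also have "\<dots> = 2*C^2*(r^2+d^2)" by (simp add: algebra_simps)
  finally show ?thesis .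
qed

lemma arith_U:
  fixes r d h C u :: real
  assumes "0 \<le> r" "0 \<le> d" "0 \<le> h" "0 \<le> C" "u \<le> r + h*C*(r+d)" "0 \<le> u"
  shows "u^2 \<le> r^2 + h*(4*C + 2*h*C^2)*(r^2+d^2)"
proof -
  have "u^2 \<le> (r + h*C*(r+d))^2" by (rule power_mono) (use assms in auto)
  moreover have "(r + h*C*(r+d))^2 = r^2 + 2*(h*C)*(r*(r+d)) + (h*C)^2*(r+d)^2"
    by (simp add: power2_eq_square algebra_simps)
  moreover have "2*(h*C)*(r*(r+d)) \<le> 2*(h*C)*(2*(r^2+d^2))"
  proof (rule mult_left_mono)
    have "0 \<le> (r - d)*(r - d)" by simp
    then have a: "2*(r*d) \<le> r*r + d*d" by (simp add: algebra_simps)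
    have b: "0 \<le> r*r" "0 \<le> d*d" by simp_all
    have lin: "\<And>(X::real) (Y::real) (Z::real). 2*Y \<le> X + Z \<Longrightarrow> 0 \<le> X \<Longrightarrow> 0 \<le> Z \<Longrightarrow> X + Y \<le> 2*X+2*Z" by linarith
    from lin[OF a b] have g: "r*r + r*d \<le> 2*(r*r) + 2*(d*d)" .
    then show "r*(r+d) \<le> 2*(r^2+d^2)" by (simp add: power2_eq_square distrib_left)
  qed (use assms in simp)
  moreover have "(h*C)^2*(r+d)^2 \<le> (h*C)^2*(2*(r^2+d^2))"
    by (rule mult_left_mono[OF sq_sum_le]) simp
  moreover have "r^2 + h*(4*C + 2*h*C^2)*(r^2+d^2) = r^2 + 2*(h*C)*(2*(r^2+d^2)) + (h*C)^2*(2*(r^2+d^2))"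
    by (simp add: power2_eq_square algebra_simps)
  ultimately show ?thesis by linarith
qed


lemma grid_nonneg: "0 < T \<Longrightarrow> 0 \<le> grid_time T N i"
  by (simp add: grid_time_def)

lemma grid_Suc: "grid_time T N (Suc i) = grid_time T N i + T / real N"
  by (simp add: grid_time_def add_divide_distrib algebra_simps)

lemma grid_mono: "0 < T \<Longrightarrow> i \<le> j \<Longrightarrow> grid_time T N i \<le> grid_time T N j"
  unfolding grid_time_def by (rule mult_right_mono) auto

lemma grid_le_T: "0 < T \<Longrightarrow> 1 \<le> N \<Longrightarrow> i \<le> N \<Longrightarrow> grid_time T N i \<le> T"
proof -
  assume T: "0 < T" and N: "1 \<le> N" and i: "i \<le> N"
  have "real i * (T / real N) \<le> real N * (T / real N)"
    by (rule mult_right_mono) (use i T in auto)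
  also have "\<dots> = T" using N by simp
  finally show ?thesis by (simp add: grid_time_def)
qed

lemma grid_lt: "0 < T \<Longrightarrow> 1 \<le> N \<Longrightarrow> grid_time T N i < grid_time T N (Suc i)"
  by (simp add: grid_Suc)

lemma cont_slice:
  assumes cont: "continuous_on ({0..T} \<times> UNIV \<times> A) (\<lambda>(t, x, a). f t x a)" and t: "t \<in> {0..T}"
  shows "continuous_on (UNIV \<times> A) (\<lambda>(x, a). f t x a)"
proof -
  have "continuous_on (UNIV \<times> A) (\<lambda>z. (\<lambda>(t, x, a). f t x a) ((\<lambda>z. (t, fst z, snd z)) z))"
    by (rule continuous_on_compose2[OF cont]) (use t in \<open>auto intro!: continuous_intros\<close>)
  then show ?thesis by (simp add: case_prod_unfold)
qed

lemma meas_coef: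
  fixes f :: "real \<Rightarrow> real^'d \<Rightarrow> real^'q \<Rightarrow> 'b::euclidean_space"
  assumes cont: "continuous_on ({0..T} \<times> UNIV \<times> A) (\<lambda>(t, x, a). f t x a)" and t: "t \<in> {0..T}"
    and X: "X \<in> borel_measurable N" and a: "a \<in> borel_measurable N" and aA: "\<forall>\<omega>\<in>space N. a \<omega> \<in> A"
  shows "(\<lambda>\<omega>. f t (X \<omega>) (a \<omega>)) \<in> borel_measurable N"
proof -
  have m1: "(\<lambda>(x, a). f t x a) \<in> borel_measurable (restrict_space borel (UNIV \<times> A))"
    by (rule borel_measurable_continuous_on_restrict[OF cont_slice[OF cont t]])
  have "(\<lambda>\<omega>. (X \<omega>, a \<omega>)) \<in> borel_measurable N"
    using measurable_Pair[OF X a] by (simp add: borel_prod)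
  then have m2: "(\<lambda>\<omega>. (X \<omega>, a \<omega>)) \<in> measurable N (restrict_space borel (UNIV \<times> A))"
    unfolding measurable_restrict_space2_iff using aA by auto
  from measurable_comp[OF m2 m1] show ?thesis by (simp add: comp_def)
qed

lemma euler_meas:
  fixes \<mu> :: "real \<Rightarrow> real^'d \<Rightarrow> real^'q \<Rightarrow> real^'d" and \<sigma> :: "real \<Rightarrow> real^'d \<Rightarrow> real^'q \<Rightarrow> real^'p^'d"
    and B :: "real \<Rightarrow> 'w \<Rightarrow> real^'p"
  assumes BM: "brownian_motion M B" and T: "0 < T" and N: "1 \<le> N"
    and c\<mu>: "continuous_on ({0..T} \<times> UNIV \<times> A) (\<lambda>(t, x, a). \<mu> t x a)"
    and c\<sigma>: "continuous_on ({0..T} \<times> UNIV \<times> A) (\<lambda>(t, x, a). \<sigma> t x a)"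
    and a: "a \<in> grid_controls M B T N A" and e: "e \<in> grid_perturbations M B T N \<epsilon>"
  shows "n + k \<le> N \<Longrightarrow> (\<lambda>\<omega>. euler_scheme \<mu> \<sigma> B T N n a e x k \<omega>) \<in> borel_measurable (BM_filtration M B (grid_time T N (n + k)))"
proof (induction k)
  case 0 show ?case by simp
next
  case (Suc k)
  define i where "i = n + k"
  have i: "i < N" using Suc.prems by (simp add: i_def)
  let ?F = "BM_filtration M B (grid_time T N i)"
  let ?G = "BM_filtration M B (grid_time T N (Suc i))"
  have X: "(\<lambda>\<omega>. euler_scheme \<mu> \<sigma> B T N n a e x k \<omega>) \<in> borel_measurable ?F"
    using Suc by (simp add: i_def)
  have ai: "a i \<in> borel_measurable ?F" "\<forall>\<omega>\<in>space ?F. a i \<omega> \<in> A"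
    using a i by (auto simp: grid_controls_def)
  have ei: "e i \<in> borel_measurable ?F" using e i by (auto simp: grid_perturbations_def)
  have ti: "grid_time T N i \<in> {0..T}" using grid_nonneg[OF T] grid_le_T[OF T N, of i] i by auto
  have Xe: "(\<lambda>\<omega>. euler_scheme \<mu> \<sigma> B T N n a e x k \<omega> + e i \<omega>) \<in> borel_measurable ?F"
    using X ei by (rule borel_measurable_add)
  have m\<mu>: "(\<lambda>\<omega>. \<mu> (grid_time T N i) (euler_scheme \<mu> \<sigma> B T N n a e x k \<omega> + e i \<omega>) (a i \<omega>)) \<in> borel_measurable ?F"
    by (rule meas_coef[OF c\<mu> ti Xe ai])
  have m\<sigma>: "(\<lambda>\<omega>. \<sigma> (grid_time T N i) (euler_scheme \<mu> \<sigma> B T N n a e x k \<omega> + e i \<omega>) (a i \<omega>)) \<in> borel_measurable ?F"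
    by (rule meas_coef[OF c\<sigma> ti Xe ai])
  have le: "grid_time T N i \<le> grid_time T N (Suc i)" by (rule grid_mono[OF T]) simp
  have XG: "(\<lambda>\<omega>. euler_scheme \<mu> \<sigma> B T N n a e x k \<omega>) \<in> borel_measurable ?G" by (rule meas_mono[OF le X])
  have m\<mu>G: "(\<lambda>\<omega>. \<mu> (grid_time T N i) (euler_scheme \<mu> \<sigma> B T N n a e x k \<omega> + e i \<omega>) (a i \<omega>)) \<in> borel_measurable ?G"
    by (rule meas_mono[OF le m\<mu>])
  have m\<sigma>G: "(\<lambda>\<omega>. \<sigma> (grid_time T N i) (euler_scheme \<mu> \<sigma> B T N n a e x k \<omega> + e i \<omega>) (a i \<omega>)) \<in> borel_measurable ?G"
    by (rule meas_mono[OF le m\<sigma>])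
  have dB: "(\<lambda>\<omega>. B (grid_time T N (Suc i)) \<omega> - B (grid_time T N i) \<omega>) \<in> borel_measurable ?G"
    by (intro borel_measurable_diff filt_meas_B) (use le grid_nonneg[OF T] in auto)
  have "(\<lambda>\<omega>. euler_scheme \<mu> \<sigma> B T N n a e x k \<omega>
       + (T / real N) *\<^sub>R \<mu> (grid_time T N i) (euler_scheme \<mu> \<sigma> B T N n a e x k \<omega> + e i \<omega>) (a i \<omega>)
       + \<sigma> (grid_time T N i) (euler_scheme \<mu> \<sigma> B T N n a e x k \<omega> + e i \<omega>) (a i \<omega>)
          *v (B (grid_time T N (Suc i)) \<omega> - B (grid_time T N i) \<omega>)) \<in> borel_measurable ?G"
    by (intro borel_measurable_add borel_measurable_scaleR borel_measurable_const meas_mv XG m\<mu>G m\<sigma>G dB)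
  then show ?case by (simp add: i_def Let_def)
qed

lemma euler_diff_L2:
  fixes \<mu> :: "real \<Rightarrow> real^'d \<Rightarrow> real^'q \<Rightarrow> real^'d" and \<sigma> :: "real \<Rightarrow> real^'d \<Rightarrow> real^'q \<Rightarrow> real^'p^'d"
    and B :: "real \<Rightarrow> 'w \<Rightarrow> real^'p"
  assumes BM: "brownian_motion M B" and T: "0 < T" and N: "1 \<le> N"
    and c\<mu>: "continuous_on ({0..T} \<times> UNIV \<times> A) (\<lambda>(t, x, a). \<mu> t x a)"
    and c\<sigma>: "continuous_on ({0..T} \<times> UNIV \<times> A) (\<lambda>(t, x, a). \<sigma> t x a)"
    and Lip: "\<forall>a\<in>A. \<forall>t\<in>{0..T}. \<forall>x y. norm (\<mu> t x a - \<mu> t y a) \<le> C * norm (x - y) \<and> norm (\<sigma> t x a - \<sigma> t y a) \<le> C * norm (x - y)"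
    and C: "0 \<le> C"
    and a: "a \<in> grid_controls M B T N A"
    and e1: "e1 \<in> grid_perturbations M B T N \<epsilon>1" and e2: "e2 \<in> grid_perturbations M B T N \<epsilon>2"
    and \<delta>: "0 \<le> \<delta>" "\<forall>i<N. \<forall>\<omega>\<in>space M. norm (e1 i \<omega> - e2 i \<omega>) \<le> \<delta>"
  shows "n + k \<le> N \<Longrightarrow>
    integrable M (\<lambda>\<omega>. (norm (euler_scheme \<mu> \<sigma> B T N n a e1 x1 k \<omega> - euler_scheme \<mu> \<sigma> B T N n a e2 x2 k \<omega>))^2) \<and>
    (\<integral>\<omega>. (norm (euler_scheme \<mu> \<sigma> B T N n a e1 x1 k \<omega> - euler_scheme \<mu> \<sigma> B T N n a e2 x2 k \<omega>))^2 \<partial>M) + \<delta>^2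
      \<le> (1 + (T / real N) * (4*C + 2*T*C^2 + 2*real CARD('p)*C^2))^k * ((norm (x1 - x2))^2 + \<delta>^2)"
proof (induction k)
  case 0
  interpret prob_space M using BM by (rule bm_prob)
  show ?case by (simp add: prob_space)
next
  case (Suc k)
  interpret prob_space M using BM by (rule bm_prob)
  define h where "h = T / real N"
  define K where "K = 4*C + 2*T*C^2 + 2*real CARD('p)*C^2"
  define i where "i = n + k"
  have i: "i < N" using Suc.prems by (simp add: i_def)
  define ti where "ti = grid_time T N i"
  define ti' where "ti' = grid_time T N (Suc i)"
  have ti: "ti \<in> {0..T}" using grid_nonneg[OF T] grid_le_T[OF T N, of i] i by (auto simp: ti_def)
  have ti0: "0 \<le> ti" using ti by simp
  have tlt: "ti < ti'" unfolding ti_def ti'_def using grid_lt[OF T N] by simp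
  have hdef: "ti' - ti = h" by (simp add: ti_def ti'_def h_def grid_Suc)
  have h0: "0 \<le> h" using T by (simp add: h_def)
  have hT: "h \<le> T" unfolding h_def using T N by (simp add: divide_le_eq mult_le_cancel_left1)
  let ?F = "BM_filtration M B ti"
  define X1 where "X1 \<omega> = euler_scheme \<mu> \<sigma> B T N n a e1 x1 k \<omega>" for \<omega>
  define X2 where "X2 \<omega> = euler_scheme \<mu> \<sigma> B T N n a e2 x2 k \<omega>" for \<omega>
  define D where "D \<omega> = X1 \<omega> - X2 \<omega>" for \<omega>
  have IH: "integrable M (\<lambda>\<omega>. (norm (D \<omega>))^2)"
    "(\<integral>\<omega>. (norm (D \<omega>))^2 \<partial>M) + \<delta>^2 \<le> (1 + h * K)^k * ((norm (x1 - x2))^2 + \<delta>^2)"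
    using Suc by (auto simp: D_def X1_def X2_def h_def K_def)
  have X1F: "X1 \<in> borel_measurable ?F"
    unfolding X1_def[abs_def] ti_def i_def by (rule euler_meas[OF BM T N c\<mu> c\<sigma> a e1]) (use Suc.prems in simp)
  have X2F: "X2 \<in> borel_measurable ?F"
    unfolding X2_def[abs_def] ti_def i_def by (rule euler_meas[OF BM T N c\<mu> c\<sigma> a e2]) (use Suc.prems in simp)
  have ai: "a i \<in> borel_measurable ?F" "\<forall>\<omega>\<in>space ?F. a i \<omega> \<in> A"
    using a i by (auto simp: grid_controls_def ti_def)
  have e1i: "e1 i \<in> borel_measurable ?F" using e1 i by (auto simp: grid_perturbations_def ti_def)
  have e2i: "e2 i \<in> borel_measurable ?F" using e2 i by (auto simp: grid_perturbations_def ti_def)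
  have Y1: "(\<lambda>\<omega>. X1 \<omega> + e1 i \<omega>) \<in> borel_measurable ?F" using X1F e1i by (rule borel_measurable_add)
  have Y2: "(\<lambda>\<omega>. X2 \<omega> + e2 i \<omega>) \<in> borel_measurable ?F" using X2F e2i by (rule borel_measurable_add)
  define U where "U \<omega> = D \<omega> + h *\<^sub>R (\<mu> ti (X1 \<omega> + e1 i \<omega>) (a i \<omega>) - \<mu> ti (X2 \<omega> + e2 i \<omega>) (a i \<omega>))" for \<omega>
  define S where "S \<omega> = \<sigma> ti (X1 \<omega> + e1 i \<omega>) (a i \<omega>) - \<sigma> ti (X2 \<omega> + e2 i \<omega>) (a i \<omega>)" for \<omega>
  have UF: "U \<in> borel_measurable ?F"
    unfolding U_def[abs_def] D_def
    by (intro borel_measurable_add borel_measurable_diff borel_measurable_scaleR borel_measurable_const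
        X1F X2F meas_coef[OF c\<mu> ti Y1 ai] meas_coef[OF c\<mu> ti Y2 ai])
  have SF: "S \<in> borel_measurable ?F"
    unfolding S_def[abs_def]
    by (intro borel_measurable_diff meas_coef[OF c\<sigma> ti Y1 ai] meas_coef[OF c\<sigma> ti Y2 ai])
  have DM: "D \<in> borel_measurable M" unfolding D_def[abs_def]
    using meas_filt_M[OF BM X1F] meas_filt_M[OF BM X2F] by (rule borel_measurable_diff)
  have UM: "U \<in> borel_measurable M" by (rule meas_filt_M[OF BM UF])
  have SM: "S \<in> borel_measurable M" by (rule meas_filt_M[OF BM SF])
  have bnd: "norm (\<mu> ti (X1 \<omega> + e1 i \<omega>) (a i \<omega>) - \<mu> ti (X2 \<omega> + e2 i \<omega>) (a i \<omega>)) \<le> C * (norm (D \<omega>) + \<delta>)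
      \<and> norm (S \<omega>) \<le> C * (norm (D \<omega>) + \<delta>)" if \<omega>: "\<omega> \<in> space M" for \<omega>
  proof -
    have aA: "a i \<omega> \<in> A" using ai \<omega> by simp
    have "norm ((X1 \<omega> + e1 i \<omega>) - (X2 \<omega> + e2 i \<omega>)) \<le> norm (D \<omega>) + norm (e1 i \<omega> - e2 i \<omega>)"
    proof -
      have eq: "(X1 \<omega> + e1 i \<omega>) - (X2 \<omega> + e2 i \<omega>) = D \<omega> + (e1 i \<omega> - e2 i \<omega>)" by (simp add: D_def algebra_simps)
      show ?thesis unfolding eq by (rule norm_triangle_ineq)
    qed
    also have "\<dots> \<le> norm (D \<omega>) + \<delta>" using \<delta>(2) i \<omega> by auto
    finally have nd: "norm ((X1 \<omega> + e1 i \<omega>) - (X2 \<omega> + e2 i \<omega>)) \<le> norm (D \<omega>) + \<delta>" .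
    have L: "norm (\<mu> ti (X1 \<omega> + e1 i \<omega>) (a i \<omega>) - \<mu> ti (X2 \<omega> + e2 i \<omega>) (a i \<omega>)) \<le> C * norm ((X1 \<omega> + e1 i \<omega>) - (X2 \<omega> + e2 i \<omega>))"
      "norm (S \<omega>) \<le> C * norm ((X1 \<omega> + e1 i \<omega>) - (X2 \<omega> + e2 i \<omega>))"
    proof -
      have Lx: "\<And>x y. norm (\<mu> ti x (a i \<omega>) - \<mu> ti y (a i \<omega>)) \<le> C * norm (x - y) \<and> norm (\<sigma> ti x (a i \<omega>) - \<sigma> ti y (a i \<omega>)) \<le> C * norm (x - y)"
        using Lip aA ti by blast
      show "norm (\<mu> ti (X1 \<omega> + e1 i \<omega>) (a i \<omega>) - \<mu> ti (X2 \<omega> + e2 i \<omega>) (a i \<omega>)) \<le> C * norm ((X1 \<omega> + e1 i \<omega>) - (X2 \<omega> + e2 i \<omega>))"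
        using Lx by blast
      show "norm (S \<omega>) \<le> C * norm ((X1 \<omega> + e1 i \<omega>) - (X2 \<omega> + e2 i \<omega>))"
        unfolding S_def using Lx by blast
    qed
    have "C * norm ((X1 \<omega> + e1 i \<omega>) - (X2 \<omega> + e2 i \<omega>)) \<le> C * (norm (D \<omega>) + \<delta>)"
      by (rule mult_left_mono[OF nd C])
    with L show ?thesis by linarith
  qed
  have Ubnd: "(norm (U \<omega>))^2 \<le> (norm (D \<omega>))^2 + h*(4*C + 2*h*C^2)*((norm (D \<omega>))^2 + \<delta>^2)" if \<omega>: "\<omega> \<in> space M" for \<omega>
  proof (rule arith_U)
    have "norm (U \<omega>) \<le> norm (D \<omega>) + norm (h *\<^sub>R (\<mu> ti (X1 \<omega> + e1 i \<omega>) (a i \<omega>) - \<mu> ti (X2 \<omega> + e2 i \<omega>) (a i \<omega>)))"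
      unfolding U_def by (rule norm_triangle_ineq)
    also have "\<dots> = norm (D \<omega>) + h * norm (\<mu> ti (X1 \<omega> + e1 i \<omega>) (a i \<omega>) - \<mu> ti (X2 \<omega> + e2 i \<omega>) (a i \<omega>))"
      using h0 by simp
    also have "\<dots> \<le> norm (D \<omega>) + h * (C * (norm (D \<omega>) + \<delta>))"
      using mult_left_mono[OF conjunct1[OF bnd[OF \<omega>]] h0] by simp
    finally show "norm (U \<omega>) \<le> norm (D \<omega>) + h * C * (norm (D \<omega>) + \<delta>)" by (simp add: mult.assoc)
  qed (use h0 C \<delta> in auto)
  have Sbnd: "(norm (S \<omega>))^2 \<le> 2*C^2*((norm (D \<omega>))^2 + \<delta>^2)" if \<omega>: "\<omega> \<in> space M" for \<omega>
    by (rule arith_S[OF C]) (use bnd[OF \<omega>] in auto)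
  have iD: "integrable M (\<lambda>\<omega>. (norm (D \<omega>))^2 + \<delta>^2)" using IH(1) by simp
  have iU: "integrable M (\<lambda>\<omega>. (norm (U \<omega>))^2)"
  proof (rule Bochner_Integration.integrable_bound)
    show "integrable M (\<lambda>\<omega>. (norm (D \<omega>))^2 + h*(4*C + 2*h*C^2)*((norm (D \<omega>))^2 + \<delta>^2))"
      using IH(1) iD by simp
    show "(\<lambda>\<omega>. (norm (U \<omega>))^2) \<in> borel_measurable M" using UM by measurable
    show "AE \<omega> in M. norm ((norm (U \<omega>))^2) \<le> norm ((norm (D \<omega>))^2 + h*(4*C + 2*h*C^2)*((norm (D \<omega>))^2 + \<delta>^2))"
    proof (rule AE_I2)
      fix \<omega> assume \<omega>: "\<omega> \<in> space M"
      have "0 \<le> h*(4*C + 2*h*C^2)*((norm (D \<omega>))^2 + \<delta>^2)" using h0 C by simp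
      then show "norm ((norm (U \<omega>))^2) \<le> norm ((norm (D \<omega>))^2 + h*(4*C + 2*h*C^2)*((norm (D \<omega>))^2 + \<delta>^2))"
        using Ubnd[OF \<omega>] by simp
    qed
  qed
  have iS: "integrable M (\<lambda>\<omega>. (norm (S \<omega>))^2)"
  proof (rule Bochner_Integration.integrable_bound)
    show "integrable M (\<lambda>\<omega>. 2*C^2*((norm (D \<omega>))^2 + \<delta>^2))" using iD by simp
    show "(\<lambda>\<omega>. (norm (S \<omega>))^2) \<in> borel_measurable M" using SM by measurable
    show "AE \<omega> in M. norm ((norm (S \<omega>))^2) \<le> norm (2*C^2*((norm (D \<omega>))^2 + \<delta>^2))"
      by (rule AE_I2) (use Sbnd in simp)
  qed
  have step: "euler_scheme \<mu> \<sigma> B T N n a e1 x1 (Suc k) \<omega> - euler_scheme \<mu> \<sigma> B T N n a e2 x2 (Suc k) \<omega>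
      = U \<omega> + S \<omega> *v (B ti' \<omega> - B ti \<omega>)" for \<omega>
  proof -
    have s1: "euler_scheme \<mu> \<sigma> B T N n a e1 x1 (Suc k) \<omega> = X1 \<omega> + h *\<^sub>R \<mu> ti (X1 \<omega> + e1 i \<omega>) (a i \<omega>)
        + \<sigma> ti (X1 \<omega> + e1 i \<omega>) (a i \<omega>) *v (B ti' \<omega> - B ti \<omega>)"
      by (simp add: X1_def h_def ti_def ti'_def i_def Let_def)
    have s2: "euler_scheme \<mu> \<sigma> B T N n a e2 x2 (Suc k) \<omega> = X2 \<omega> + h *\<^sub>R \<mu> ti (X2 \<omega> + e2 i \<omega>) (a i \<omega>)
        + \<sigma> ti (X2 \<omega> + e2 i \<omega>) (a i \<omega>) *v (B ti' \<omega> - B ti \<omega>)"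
      by (simp add: X2_def h_def ti_def ti'_def i_def Let_def)
    have g: "\<And>(p::real^'d) q r p' q' r'. (p + q + r) - (p' + q' + r') = (p - p') + (q - q') + (r - r')"
      by (simp add: algebra_simps)
    show ?thesis unfolding s1 s2 g U_def S_def D_def
      by (simp add: matrix_vector_mult_diff_rdistrib scaleR_diff_right)
  qed
  note sL2 = step_L2[OF BM ti0 tlt UF SF iU iS]
  show ?case
  proof
    show "integrable M (\<lambda>\<omega>. (norm (euler_scheme \<mu> \<sigma> B T N n a e1 x1 (Suc k) \<omega> - euler_scheme \<mu> \<sigma> B T N n a e2 x2 (Suc k) \<omega>))^2)"
      unfolding step using sL2(1) .
    define ED where "ED = (\<integral>\<omega>. (norm (D \<omega>))^2 \<partial>M)"
    define w where "w = ED + \<delta>^2"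
    have ED0: "0 \<le> ED" unfolding ED_def by simp
    have w0: "0 \<le> w" using ED0 by (simp add: w_def)
    have EU: "(\<integral>\<omega>. (norm (U \<omega>))^2 \<partial>M) \<le> ED + h*(4*C + 2*h*C^2)*w"
    proof -
      have "(\<integral>\<omega>. (norm (U \<omega>))^2 \<partial>M) \<le> (\<integral>\<omega>. (norm (D \<omega>))^2 + h*(4*C + 2*h*C^2)*((norm (D \<omega>))^2 + \<delta>^2) \<partial>M)"
        by (rule integral_mono_AE[OF iU]) (use IH(1) iD Ubnd in \<open>auto intro!: AE_I2\<close>)
      also have "\<dots> = ED + h*(4*C + 2*h*C^2)*w"
        using IH(1) iD by (simp add: ED_def w_def prob_space)
      finally show ?thesis .
    qed
    have ES: "(\<integral>\<omega>. (norm (S \<omega>))^2 \<partial>M) \<le> 2*C^2*w"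
    proof -
      have "(\<integral>\<omega>. (norm (S \<omega>))^2 \<partial>M) \<le> (\<integral>\<omega>. 2*C^2*((norm (D \<omega>))^2 + \<delta>^2) \<partial>M)"
        by (rule integral_mono_AE[OF iS]) (use iD Sbnd in \<open>auto intro!: AE_I2\<close>)
      also have "\<dots> = 2*C^2*w"
        using IH(1) by (simp add: ED_def w_def prob_space)
      finally show ?thesis .
    qed
    define E1 where "E1 = (\<integral>\<omega>. (norm (euler_scheme \<mu> \<sigma> B T N n a e1 x1 (Suc k) \<omega> - euler_scheme \<mu> \<sigma> B T N n a e2 x2 (Suc k) \<omega>))^2 \<partial>M)"
    define EU' where "EU' = (\<integral>\<omega>. (norm (U \<omega>))^2 \<partial>M)"
    define ES' where "ES' = (\<integral>\<omega>. (norm (S \<omega>))^2 \<partial>M)"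
    define p where "p = real CARD('p)"
    define X where "X = (norm (x1 - x2))^2 + \<delta>^2"
    have p0: "0 \<le> p" by (simp add: p_def)
    have s1: "E1 \<le> EU' + p * h * ES'"
      unfolding E1_def EU'_def ES'_def p_def step using sL2(2) hdef by simp
    have EU2: "EU' \<le> ED + h*(4*C + 2*h*C^2)*w" using EU by (simp add: EU'_def)
    have ES2: "p * h * ES' \<le> p * h * (2*C^2*w)"
      by (rule mult_left_mono) (use ES p0 h0 in \<open>simp_all add: ES'_def\<close>)
    have eqr: "h*(4*C + 2*h*C^2)*w + p * h * (2*C^2*w) = h*w*(4*C + 2*h*C^2 + 2*p*C^2)"
      by (simp add: algebra_simps)
    have hw0: "0 \<le> h*w" using h0 w0 by simp
    have "2*h*C^2 \<le> 2*T*C^2" using hT by (simp add: mult_right_mono)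
    then have Kle: "4*C + 2*h*C^2 + 2*p*C^2 \<le> K" by (simp add: K_def p_def)
    have le2: "h*w*(4*C + 2*h*C^2 + 2*p*C^2) \<le> h*w*K" by (rule mult_left_mono[OF Kle hw0])
    have eqr2: "(1 + h*K)*w = w + h*w*K" by (simp add: algebra_simps)
    have B: "E1 + \<delta>^2 \<le> (1 + h*K)*w"
      using s1 EU2 ES2 eqr le2 eqr2 by (simp add: w_def)
    have K0: "0 \<le> K" unfolding K_def using C T by (intro add_nonneg_nonneg mult_nonneg_nonneg) auto
    have hK0: "0 \<le> 1 + h * K" using mult_nonneg_nonneg[OF h0 K0] by linarith
    have "(1 + h * K) * w \<le> (1 + h * K) * ((1 + h * K)^k * X)"
      using IH(2) by (intro mult_left_mono hK0) (simp add: w_def ED_def X_def)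
    then have final: "E1 + \<delta>^2 \<le> (1 + h*K)^(Suc k) * X" using B by (simp add: mult.assoc)
    then show "(\<integral>\<omega>. (norm (euler_scheme \<mu> \<sigma> B T N n a e1 x1 (Suc k) \<omega> - euler_scheme \<mu> \<sigma> B T N n a e2 x2 (Suc k) \<omega>))^2 \<partial>M) + \<delta>^2
      \<le> (1 + (T / real N) * (4*C + 2*T*C^2 + 2*real CARD('p)*C^2))^(Suc k) * ((norm (x1 - x2))^2 + \<delta>^2)"
      unfolding E1_def h_def K_def X_def .
  qed
qed

lemma L1_from_L2:
  fixes f :: "'w \<Rightarrow> real"
  assumes P: "prob_space M" and fm: "f \<in> borel_measurable M" and i2: "integrable M (\<lambda>\<omega>. (f \<omega>)^2)"
  shows "integrable M f" and "(\<integral>\<omega>. f \<omega> \<partial>M)^2 \<le> (\<integral>\<omega>. (f \<omega>)^2 \<partial>M)"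
proof -
  interpret prob_space M by (rule P)
  show i1: "integrable M f"
  proof (rule Bochner_Integration.integrable_bound)
    show "integrable M (\<lambda>\<omega>. 1 + (f \<omega>)^2)" using i2 by simp
    show "f \<in> borel_measurable M" by (rule fm)
    show "AE \<omega> in M. norm (f \<omega>) \<le> norm (1 + (f \<omega>)^2)"
    proof (rule AE_I2)
      fix \<omega>
      have "0 \<le> (\<bar>f \<omega>\<bar> - 1)^2" by simp
      then have "2 * \<bar>f \<omega>\<bar> \<le> 1 + (f \<omega>)^2" by (simp add: power2_eq_square algebra_simps)
      moreover have "0 \<le> \<bar>f \<omega>\<bar>" by simp
      ultimately show "norm (f \<omega>) \<le> norm (1 + (f \<omega>)^2)" by simp
    qed
  qed
  define m where "m = (\<integral>\<omega>. f \<omega> \<partial>M)"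
  have "0 \<le> (\<integral>\<omega>. (f \<omega> - m)^2 \<partial>M)" by simp
  also have "(\<lambda>\<omega>. (f \<omega> - m)^2) = (\<lambda>\<omega>. (f \<omega>)^2 - 2 * m * f \<omega> + m^2)"
    by (simp add: power2_eq_square algebra_simps)
  also have "(\<integral>\<omega>. (f \<omega>)^2 - 2 * m * f \<omega> + m^2 \<partial>M) = (\<integral>\<omega>. (f \<omega>)^2 \<partial>M) - 2 * m * m + m^2"
    using i1 i2 by (simp add: m_def prob_space)
  finally show "(\<integral>\<omega>. f \<omega> \<partial>M)^2 \<le> (\<integral>\<omega>. (f \<omega>)^2 \<partial>M)"
    by (simp add: m_def power2_eq_square)
qed

lemma psi_compare:
  fixes X Y :: "'w \<Rightarrow> real^'d" and \<psi> :: "real^'d \<Rightarrow> real"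
  assumes P: "prob_space M" and Xm: "X \<in> borel_measurable M" and Ym: "Y \<in> borel_measurable M"
    and c\<psi>: "continuous_on UNIV \<psi>" and L\<psi>: "\<forall>x y. \<bar>\<psi> x - \<psi> y\<bar> \<le> L * norm (x - y)" and L: "0 \<le> L"
    and i2: "integrable M (\<lambda>\<omega>. (norm (X \<omega> - Y \<omega>))^2)"
    and E2: "(\<integral>\<omega>. (norm (X \<omega> - Y \<omega>))^2 \<partial>M) \<le> b^2" and b: "0 \<le> b"
  shows "\<bar>(\<integral>\<omega>. \<psi> (X \<omega>) \<partial>M) - (\<integral>\<omega>. \<psi> (Y \<omega>) \<partial>M)\<bar> \<le> L * b"
proof -
  interpret prob_space M by (rule P)
  have \<psi>m: "\<psi> \<in> borel_measurable borel" by (rule borel_measurable_continuous_onI[OF c\<psi>])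
  have fm: "(\<lambda>\<omega>. norm (X \<omega> - Y \<omega>)) \<in> borel_measurable M" using Xm Ym by measurable
  note L12 = L1_from_L2[OF P fm i2]
  have Ef: "(\<integral>\<omega>. norm (X \<omega> - Y \<omega>) \<partial>M) \<le> b"
  proof (rule power2_le_imp_le)
    show "(\<integral>\<omega>. norm (X \<omega> - Y \<omega>) \<partial>M)^2 \<le> b^2" using L12(2) E2 by linarith
  qed (rule b)
  have \<psi>X: "(\<lambda>\<omega>. \<psi> (X \<omega>)) \<in> borel_measurable M" using measurable_compose[OF Xm \<psi>m] .
  have \<psi>Y: "(\<lambda>\<omega>. \<psi> (Y \<omega>)) \<in> borel_measurable M" using measurable_compose[OF Ym \<psi>m] .
  have ig: "integrable M (\<lambda>\<omega>. \<psi> (X \<omega>) - \<psi> (Y \<omega>))"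
  proof (rule Bochner_Integration.integrable_bound)
    show "integrable M (\<lambda>\<omega>. L * norm (X \<omega> - Y \<omega>))" using L12(1) by simp
    show "(\<lambda>\<omega>. \<psi> (X \<omega>) - \<psi> (Y \<omega>)) \<in> borel_measurable M" using \<psi>X \<psi>Y by (rule borel_measurable_diff)
    show "AE \<omega> in M. norm (\<psi> (X \<omega>) - \<psi> (Y \<omega>)) \<le> norm (L * norm (X \<omega> - Y \<omega>))"
      using L\<psi> L by (intro AE_I2) (simp add: abs_mult)
  qed
  have Eg: "\<bar>\<integral>\<omega>. \<psi> (X \<omega>) - \<psi> (Y \<omega>) \<partial>M\<bar> \<le> L * b"
  proof -
    have "\<bar>\<integral>\<omega>. \<psi> (X \<omega>) - \<psi> (Y \<omega>) \<partial>M\<bar> \<le> (\<integral>\<omega>. \<bar>\<psi> (X \<omega>) - \<psi> (Y \<omega>)\<bar> \<partial>M)"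
      by (rule integral_abs_bound)
    also have "\<dots> \<le> (\<integral>\<omega>. L * norm (X \<omega> - Y \<omega>) \<partial>M)"
      by (rule integral_mono) (use ig L12(1) L\<psi> in auto)
    also have "\<dots> = L * (\<integral>\<omega>. norm (X \<omega> - Y \<omega>) \<partial>M)" by simp
    also have "\<dots> \<le> L * b" by (rule mult_left_mono[OF Ef L])
    finally show ?thesis .
  qed
  show ?thesis
  proof (cases "integrable M (\<lambda>\<omega>. \<psi> (Y \<omega>))")
    case True
    have "integrable M (\<lambda>\<omega>. (\<psi> (X \<omega>) - \<psi> (Y \<omega>)) + \<psi> (Y \<omega>))" by (rule Bochner_Integration.integrable_add[OF ig True])
    then have iX: "integrable M (\<lambda>\<omega>. \<psi> (X \<omega>))" by simp
    have "(\<integral>\<omega>. \<psi> (X \<omega>) \<partial>M) - (\<integral>\<omega>. \<psi> (Y \<omega>) \<partial>M) = (\<integral>\<omega>. \<psi> (X \<omega>) - \<psi> (Y \<omega>) \<partial>M)"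
      using iX True by simp
    then show ?thesis using Eg by simp
  next
    case False
    have "\<not> integrable M (\<lambda>\<omega>. \<psi> (X \<omega>))"
    proof
      assume "integrable M (\<lambda>\<omega>. \<psi> (X \<omega>))"
      then have "integrable M (\<lambda>\<omega>. \<psi> (X \<omega>) - (\<psi> (X \<omega>) - \<psi> (Y \<omega>)))" by (rule Bochner_Integration.integrable_diff[OF _ ig])
      then show False using False by simp
    qed
    then have "(\<integral>\<omega>. \<psi> (X \<omega>) \<partial>M) = 0" by (rule not_integrable_integral_eq)
    moreover have "(\<integral>\<omega>. \<psi> (Y \<omega>) \<partial>M) = 0" using False by (rule not_integrable_integral_eq)
    ultimately show ?thesis using L b by simp
  qed
qed

theorem proposition4p1:
  fixes M :: "'w measure" and B :: "real \<Rightarrow> 'w \<Rightarrow> real^'p"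
    and \<mu> :: "real \<Rightarrow> real^'d \<Rightarrow> real^'q \<Rightarrow> real^'d"
    and \<sigma> :: "real \<Rightarrow> real^'d \<Rightarrow> real^'q \<Rightarrow> real^'p^'d"
    and A :: "(real^'q) set" and \<psi> :: "real^'d \<Rightarrow> real" and T C\<^sub>0 L :: real
  assumes "T > 0"
    and "brownian_motion M B"
    and "compact A"
    and "continuous_on ({0..T} \<times> UNIV \<times> A) (\<lambda>(t, x, a). \<mu> t x a)"
    and "continuous_on ({0..T} \<times> UNIV \<times> A) (\<lambda>(t, x, a). \<sigma> t x a)"
    and "\<forall>a\<in>A. \<forall>t\<in>{0..T}. \<forall>s\<in>{0..T}. \<forall>x y.
           norm (\<mu> t x a - \<mu> s y a) + norm (\<sigma> t x a - \<sigma> s y a)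
             \<le> C\<^sub>0 * (norm (x - y) + sqrt \<bar>t - s\<bar>)"
    and "continuous_on UNIV \<psi>"
    and "\<forall>x y. \<bar>\<psi> x - \<psi> y\<bar> \<le> L * norm (x - y)"
  shows "\<exists>C\<ge>0. \<forall>N::nat. N \<ge> 1 \<longrightarrow> (\<forall>\<epsilon>>0. \<forall>n\<le>N. \<forall>x y.
           \<bar>v_eps M B \<mu> \<sigma> A \<psi> T N \<epsilon> n x - v_eps M B \<mu> \<sigma> A \<psi> T N \<epsilon> n y\<bar>
              \<le> L * C * norm (x - y)
         \<and> \<bar>v_tilde M B \<mu> \<sigma> A \<psi> T N n x - v_eps M B \<mu> \<sigma> A \<psi> T N \<epsilon> n x\<bar> \<le> L * C * \<epsilon>)"
proof -
  note BM = assms(2) and T = assms(1) and c\<mu> = assms(4) and c\<sigma> = assms(5)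
  note c\<psi> = assms(7) and L\<psi> = assms(8)
  interpret prob_space M using BM by (rule bm_prob)
  define C1 where "C1 = \<bar>C\<^sub>0\<bar>"
  have C1: "0 \<le> C1" by (simp add: C1_def)
  have Lip: "\<forall>a\<in>A. \<forall>t\<in>{0..T}. \<forall>x y. norm (\<mu> t x a - \<mu> t y a) \<le> C1 * norm (x - y) \<and> norm (\<sigma> t x a - \<sigma> t y a) \<le> C1 * norm (x - y)"
  proof (intro ballI allI)
    fix a t x y assume a: "a \<in> A" and t: "t \<in> {0..T}"
    have h: "norm (\<mu> t x a - \<mu> t y a) + norm (\<sigma> t x a - \<sigma> t y a) \<le> C\<^sub>0 * (norm (x - y) + sqrt \<bar>t - t\<bar>)"
      using assms(6) a t by blast
    have "C\<^sub>0 * (norm (x - y) + sqrt \<bar>t - t\<bar>) = C\<^sub>0 * norm (x - y)" by simp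
    also have "\<dots> \<le> C1 * norm (x - y)" unfolding C1_def by (rule mult_right_mono) auto
    finally have "norm (\<mu> t x a - \<mu> t y a) + norm (\<sigma> t x a - \<sigma> t y a) \<le> C1 * norm (x - y)"
      using h by linarith
    moreover have "0 \<le> norm (\<mu> t x a - \<mu> t y a)" "0 \<le> norm (\<sigma> t x a - \<sigma> t y a)" by simp_all
    ultimately show "norm (\<mu> t x a - \<mu> t y a) \<le> C1 * norm (x - y) \<and> norm (\<sigma> t x a - \<sigma> t y a) \<le> C1 * norm (x - y)"
      by linarith
  qed
  have L0: "0 \<le> L"
  proof -
    obtain k :: 'd where True by blast
    have "\<bar>\<psi> (axis k 1) - \<psi> 0\<bar> \<le> L * norm (axis k (1::real) - 0)" using L\<psi> by blast
    then show ?thesis by simp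
  qed
  define K where "K = 4*C1 + 2*T*C1^2 + 2*real CARD('p)*C1^2"
  have K0: "0 \<le> K" unfolding K_def using C1 T by (intro add_nonneg_nonneg mult_nonneg_nonneg) auto
  define Cst where "Cst = exp (K * T / 2)"
  have Cst0: "0 \<le> Cst" by (simp add: Cst_def)
  have Cst2: "exp (K * T) = Cst^2"
    by (simp add: Cst_def power2_eq_square exp_add[symmetric])
  have powb: "(1 + (T / real N) * K)^k \<le> exp (K * T)" if N: "1 \<le> N" and k: "k \<le> N" for N k :: nat
  proof -
    have h0: "0 \<le> T / real N * K" using T K0 by simp
    have "(1 + (T / real N) * K)^k \<le> (1 + (T / real N) * K)^N"
      by (rule power_increasing[OF k]) (use h0 in simp)
    also have "\<dots> \<le> (exp (T / real N * K))^N"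
      by (rule power_mono) (use h0 in simp_all)
    also have "\<dots> = exp (real N * (T / real N * K))" by (rule exp_of_nat_mult[symmetric])
    also have "\<dots> = exp (K * T)" using N by simp
    finally show ?thesis .
  qed
  show ?thesis
  proof (rule exI[of _ Cst], intro conjI allI impI)
    show "0 \<le> Cst" by (rule Cst0)
  next
    fix N :: nat and \<epsilon> :: real and n :: nat and x y :: "real^'d"
    assume N: "1 \<le> N" and \<epsilon>: "0 < \<epsilon>" and n: "n \<le> N"
    have kN: "n + (N - n) \<le> N" using n by simp
    have kle: "N - n \<le> N" by simp
    have Xm: "(\<lambda>\<omega>. euler_scheme \<mu> \<sigma> B T N n a e z (N - n) \<omega>) \<in> borel_measurable M"
      if a: "a \<in> grid_controls M B T N A" and e: "e \<in> grid_perturbations M B T N \<epsilon>'" for a e z \<epsilon>'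
      by (rule meas_filt_M[OF BM euler_meas[OF BM T N c\<mu> c\<sigma> a e]]) (rule kN)
    have zero: "(\<lambda>_ _. 0) \<in> grid_perturbations M B T N \<epsilon>"
      using \<epsilon> by (auto simp: grid_perturbations_def)
    show "\<bar>v_eps M B \<mu> \<sigma> A \<psi> T N \<epsilon> n x - v_eps M B \<mu> \<sigma> A \<psi> T N \<epsilon> n y\<bar> \<le> L * Cst * norm (x - y)"
      unfolding v_eps_def
    proof (rule sup_close)
      show "0 \<le> L * Cst * norm (x - y)" using L0 Cst0 by simp
      have *: "\<bar>(\<integral>\<omega>. \<psi> (euler_scheme \<mu> \<sigma> B T N n (fst ae) (snd ae) x (N - n) \<omega>) \<partial>M)
          - (\<integral>\<omega>. \<psi> (euler_scheme \<mu> \<sigma> B T N n (fst ae) (snd ae) y (N - n) \<omega>) \<partial>M)\<bar> \<le> L * Cst * norm (x - y)"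
        if ae: "ae \<in> grid_controls M B T N A \<times> grid_perturbations M B T N \<epsilon>" for ae
      proof -
        have a: "fst ae \<in> grid_controls M B T N A" and e: "snd ae \<in> grid_perturbations M B T N \<epsilon>"
          using ae by auto
        have D: "integrable M (\<lambda>\<omega>. (norm (euler_scheme \<mu> \<sigma> B T N n (fst ae) (snd ae) x (N - n) \<omega> - euler_scheme \<mu> \<sigma> B T N n (fst ae) (snd ae) y (N - n) \<omega>))^2) \<and>
          (\<integral>\<omega>. (norm (euler_scheme \<mu> \<sigma> B T N n (fst ae) (snd ae) x (N - n) \<omega> - euler_scheme \<mu> \<sigma> B T N n (fst ae) (snd ae) y (N - n) \<omega>))^2 \<partial>M) + (0::real)^2
            \<le> (1 + (T / real N) * (4*C1 + 2*T*C1^2 + 2*real CARD('p)*C1^2))^(N - n) * ((norm (x - y))^2 + (0::real)^2)"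
          by (rule euler_diff_L2[OF BM T N c\<mu> c\<sigma> Lip C1 a e e]) (use kN in simp_all)
        have "(1 + (T / real N) * K)^(N - n) * (norm (x - y))^2 \<le> exp (K * T) * (norm (x - y))^2"
          by (rule mult_right_mono[OF powb[OF N kle]]) simp
        also have "\<dots> = (Cst * norm (x - y))^2" by (simp add: Cst2 power_mult_distrib)
        finally have E2: "(\<integral>\<omega>. (norm (euler_scheme \<mu> \<sigma> B T N n (fst ae) (snd ae) x (N - n) \<omega> - euler_scheme \<mu> \<sigma> B T N n (fst ae) (snd ae) y (N - n) \<omega>))^2 \<partial>M)
            \<le> (Cst * norm (x - y))^2"
          using D by (simp add: K_def)
        have "\<bar>(\<integral>\<omega>. \<psi> (euler_scheme \<mu> \<sigma> B T N n (fst ae) (snd ae) x (N - n) \<omega>) \<partial>M)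
          - (\<integral>\<omega>. \<psi> (euler_scheme \<mu> \<sigma> B T N n (fst ae) (snd ae) y (N - n) \<omega>) \<partial>M)\<bar> \<le> L * (Cst * norm (x - y))"
          by (rule psi_compare[OF prob_space_axioms Xm[OF a e] Xm[OF a e] c\<psi> L\<psi> L0 conjunct1[OF D] E2])
            (use Cst0 in simp)
        then show ?thesis by (simp add: mult.assoc)
      qed
      show "\<forall>i\<in>grid_controls M B T N A \<times> grid_perturbations M B T N \<epsilon>. \<exists>j\<in>grid_controls M B T N A \<times> grid_perturbations M B T N \<epsilon>.
          \<bar>(\<integral>\<omega>. \<psi> (euler_scheme \<mu> \<sigma> B T N n (fst i) (snd i) x (N - n) \<omega>) \<partial>M)
          - (\<integral>\<omega>. \<psi> (euler_scheme \<mu> \<sigma> B T N n (fst j) (snd j) y (N - n) \<omega>) \<partial>M)\<bar> \<le> L * Cst * norm (x - y)"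
        using * by blast
      show "\<forall>j\<in>grid_controls M B T N A \<times> grid_perturbations M B T N \<epsilon>. \<exists>i\<in>grid_controls M B T N A \<times> grid_perturbations M B T N \<epsilon>.
          \<bar>(\<integral>\<omega>. \<psi> (euler_scheme \<mu> \<sigma> B T N n (fst i) (snd i) x (N - n) \<omega>) \<partial>M)
          - (\<integral>\<omega>. \<psi> (euler_scheme \<mu> \<sigma> B T N n (fst j) (snd j) y (N - n) \<omega>) \<partial>M)\<bar> \<le> L * Cst * norm (x - y)"
        using * by blast
    qed
    show "\<bar>v_tilde M B \<mu> \<sigma> A \<psi> T N n x - v_eps M B \<mu> \<sigma> A \<psi> T N \<epsilon> n x\<bar> \<le> L * Cst * \<epsilon>"
      unfolding v_eps_def v_tilde_def
    proof (rule sup_close)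
      show "0 \<le> L * Cst * \<epsilon>" using L0 Cst0 \<epsilon> by simp
      have *: "\<bar>(\<integral>\<omega>. \<psi> (euler_scheme \<mu> \<sigma> B T N n a (\<lambda>_ _. 0) x (N - n) \<omega>) \<partial>M)
          - (\<integral>\<omega>. \<psi> (euler_scheme \<mu> \<sigma> B T N n a e x (N - n) \<omega>) \<partial>M)\<bar> \<le> L * Cst * \<epsilon>"
        if a: "a \<in> grid_controls M B T N A" and e: "e \<in> grid_perturbations M B T N \<epsilon>" for a e
      proof -
        have eb: "\<forall>i<N. \<forall>\<omega>\<in>space M. norm (e i \<omega> - 0) \<le> \<epsilon>"
          using e by (simp add: grid_perturbations_def)
        have D: "integrable M (\<lambda>\<omega>. (norm (euler_scheme \<mu> \<sigma> B T N n a e x (N - n) \<omega> - euler_scheme \<mu> \<sigma> B T N n a (\<lambda>_ _. 0) x (N - n) \<omega>))^2) \<and>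
          (\<integral>\<omega>. (norm (euler_scheme \<mu> \<sigma> B T N n a e x (N - n) \<omega> - euler_scheme \<mu> \<sigma> B T N n a (\<lambda>_ _. 0) x (N - n) \<omega>))^2 \<partial>M) + \<epsilon>^2
            \<le> (1 + (T / real N) * (4*C1 + 2*T*C1^2 + 2*real CARD('p)*C1^2))^(N - n) * ((norm (x - x))^2 + \<epsilon>^2)"
          by (rule euler_diff_L2[OF BM T N c\<mu> c\<sigma> Lip C1 a e zero _ eb]) (use kN \<epsilon> in simp_all)
        have "(1 + (T / real N) * K)^(N - n) * \<epsilon>^2 \<le> exp (K * T) * \<epsilon>^2"
          by (rule mult_right_mono[OF powb[OF N kle]]) simp
        also have "\<dots> = (Cst * \<epsilon>)^2" by (simp add: Cst2 power_mult_distrib)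
        finally have P: "(1 + (T / real N) * K)^(N - n) * \<epsilon>^2 \<le> (Cst * \<epsilon>)^2" .
        have D2: "(\<integral>\<omega>. (norm (euler_scheme \<mu> \<sigma> B T N n a e x (N - n) \<omega> - euler_scheme \<mu> \<sigma> B T N n a (\<lambda>_ _. 0) x (N - n) \<omega>))^2 \<partial>M) + \<epsilon>^2
            \<le> (1 + (T / real N) * K)^(N - n) * \<epsilon>^2"
          using conjunct2[OF D] by (simp add: K_def)
        have E2: "(\<integral>\<omega>. (norm (euler_scheme \<mu> \<sigma> B T N n a e x (N - n) \<omega> - euler_scheme \<mu> \<sigma> B T N n a (\<lambda>_ _. 0) x (N - n) \<omega>))^2 \<partial>M)
            \<le> (Cst * \<epsilon>)^2"
          using D2 P zero_le_power2[of \<epsilon>] by linarith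
        have "\<bar>(\<integral>\<omega>. \<psi> (euler_scheme \<mu> \<sigma> B T N n a e x (N - n) \<omega>) \<partial>M)
          - (\<integral>\<omega>. \<psi> (euler_scheme \<mu> \<sigma> B T N n a (\<lambda>_ _. 0) x (N - n) \<omega>) \<partial>M)\<bar> \<le> L * (Cst * \<epsilon>)"
          by (rule psi_compare[OF prob_space_axioms Xm[OF a e] Xm[OF a zero] c\<psi> L\<psi> L0 conjunct1[OF D] E2])
            (use Cst0 \<epsilon> in simp)
        then show ?thesis by (simp add: mult.assoc abs_minus_commute)
      qed
      show "\<forall>i\<in>grid_controls M B T N A. \<exists>j\<in>grid_controls M B T N A \<times> grid_perturbations M B T N \<epsilon>.
          \<bar>(\<integral>\<omega>. \<psi> (euler_scheme \<mu> \<sigma> B T N n i (\<lambda>_ _. 0) x (N - n) \<omega>) \<partial>M)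
          - (\<integral>\<omega>. \<psi> (euler_scheme \<mu> \<sigma> B T N n (fst j) (snd j) x (N - n) \<omega>) \<partial>M)\<bar> \<le> L * Cst * \<epsilon>"
      proof
        fix a assume a: "a \<in> grid_controls M B T N A"
        show "\<exists>j\<in>grid_controls M B T N A \<times> grid_perturbations M B T N \<epsilon>.
          \<bar>(\<integral>\<omega>. \<psi> (euler_scheme \<mu> \<sigma> B T N n a (\<lambda>_ _. 0) x (N - n) \<omega>) \<partial>M)
          - (\<integral>\<omega>. \<psi> (euler_scheme \<mu> \<sigma> B T N n (fst j) (snd j) x (N - n) \<omega>) \<partial>M)\<bar> \<le> L * Cst * \<epsilon>"
          by (rule bexI[of _ "(a, \<lambda>_ _. 0)"]) (use a zero L0 Cst0 \<epsilon> in simp_all)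
      qed
      show "\<forall>j\<in>grid_controls M B T N A \<times> grid_perturbations M B T N \<epsilon>. \<exists>i\<in>grid_controls M B T N A.
          \<bar>(\<integral>\<omega>. \<psi> (euler_scheme \<mu> \<sigma> B T N n i (\<lambda>_ _. 0) x (N - n) \<omega>) \<partial>M)
          - (\<integral>\<omega>. \<psi> (euler_scheme \<mu> \<sigma> B T N n (fst j) (snd j) x (N - n) \<omega>) \<partial>M)\<bar> \<le> L * Cst * \<epsilon>"
      proof
        fix j :: "(nat \<Rightarrow> 'w \<Rightarrow> real^'q) \<times> (nat \<Rightarrow> 'w \<Rightarrow> real^'d)"
        assume j: "j \<in> grid_controls M B T N A \<times> grid_perturbations M B T N \<epsilon>"
        then have a: "fst j \<in> grid_controls M B T N A" and e: "snd j \<in> grid_perturbations M B T N \<epsilon>" by auto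
        show "\<exists>i\<in>grid_controls M B T N A.
          \<bar>(\<integral>\<omega>. \<psi> (euler_scheme \<mu> \<sigma> B T N n i (\<lambda>_ _. 0) x (N - n) \<omega>) \<partial>M)
          - (\<integral>\<omega>. \<psi> (euler_scheme \<mu> \<sigma> B T N n (fst j) (snd j) x (N - n) \<omega>) \<partial>M)\<bar> \<le> L * Cst * \<epsilon>"
          by (rule bexI[of _ "fst j"]) (rule *[OF a e], rule a)
      qed
    qed
  qed
qed

end
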